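(* Let $\mathcal{U}\subseteq\mathbb{R}^n$ be a domain and $F=u\,\phi(r,s)$ a spherically symmetric Finsler metric on $\mathcal{U}$, where $u=|y|$, $r=|x|$, $s=\langle x,y\rangle/|y|$ and $\phi$ is smooth. Write the geodesic spray coefficients of $F$ as $G^i=uP\,y^i+u^2Q\,x^i$ with $P=P(r,s)$, $Q=Q(r,s)$, and put $$L_1=3\phi_sP_{ss}+\phi P_{sss}+\big(s\phi+(r^2-s^2)\phi_s\big)Q_{sss},$$ $$L_2=-s\phi P_{ss}+\phi_s(P-sP_s)+\big(s\phi+(r^2-s^2)\phi_s\big)(Q_s-sQ_{ss}).$$ Then the mean Landsberg curvature of $F$ is $$J_i=H\Big(x^i-s\frac{y^i}{u}\Big),\qquad H=-\frac{(r^2-s^2)(\phi-s\phi_s)L_1+\big[(n+1)(\phi-s\phi_s)+(n-2)(r^2-s^2)\phi_{ss}\big]L_2}{2(\phi-s\phi_s)\big[\phi-s\phi_s+(r^2-s^2)\phi_{ss}\big]}.$$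
   Context: Here $|\cdot|$, $\langle\cdot,\cdot\rangle$ are the Euclidean norm and inner product; subscripts $s$ denote partial derivatives in $s$. For a Finsler metric $F$ with fundamental tensor $g_{ij}=\tfrac12(F^2)_{y^iy^j}$ and inverse $(g^{ij})$, the spray coefficients are $G^i=\tfrac14 g^{il}\{(F^2)_{x^ky^l}y^k-(F^2)_{x^l}\}$; the Landsberg curvature is $L_{ijk}=-\tfrac12 F F_{y^l}\,\partial^3G^l/\partial y^i\partial y^j\partial y^k$, and the mean Landsberg curvature is $J_i=g^{jk}L_{ijk}$. *)

theory Defs
  imports "HOL-Analysis.Analysis"
begin

definition pdir :: "('a::real_normed_vector \<Rightarrow> real) \<Rightarrow> 'a \<Rightarrow> 'a \<Rightarrow> real" where
  "pdir f w v = deriv (\<lambda>t. f (v + t *\<^sub>R w)) 0"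

fun pds :: "('a::real_normed_vector \<Rightarrow> real) \<Rightarrow> 'a list \<Rightarrow> 'a \<Rightarrow> real" where
  "pds f [] = f"
| "pds f (w # ws) = pdir (pds f ws) w"

definition smooth_on :: "'a::euclidean_space set \<Rightarrow> ('a \<Rightarrow> real) \<Rightarrow> bool" where
  "smooth_on S f \<longleftrightarrow> open S \<and> (\<forall>ws. set ws \<subseteq> Basis \<longrightarrow> pds f ws differentiable_on S)"

definition pd :: "(real^'n \<Rightarrow> real) \<Rightarrow> 'n \<Rightarrow> real^'n \<Rightarrow> real" where
  "pd f i v = pdir f (axis i 1) v"

definition ds :: "(real \<Rightarrow> real \<Rightarrow> real) \<Rightarrow> real \<Rightarrow> real \<Rightarrow> real" where
  "ds f r s = deriv (\<lambda>t. f r t) s"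

definition fund_tensor :: "(real^'n \<Rightarrow> real^'n \<Rightarrow> real) \<Rightarrow> real^'n \<Rightarrow> real^'n \<Rightarrow> 'n \<Rightarrow> 'n \<Rightarrow> real" where
  "fund_tensor F x y i j = 1/2 * pd (\<lambda>y'. pd (\<lambda>y''. (F x y'')^2) j y') i y"

definition gmat :: "(real^'n \<Rightarrow> real^'n \<Rightarrow> real) \<Rightarrow> real^'n \<Rightarrow> real^'n \<Rightarrow> real^'n^'n" where
  "gmat F x y = (\<chi> i j. fund_tensor F x y i j)"

definition ginv :: "(real^'n \<Rightarrow> real^'n \<Rightarrow> real) \<Rightarrow> real^'n \<Rightarrow> real^'n \<Rightarrow> 'n \<Rightarrow> 'n \<Rightarrow> real" where
  "ginv F x y i j = matrix_inv (gmat F x y) $ i $ j"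

definition finsler_metric :: "(real^'n) set \<Rightarrow> (real^'n \<Rightarrow> real^'n \<Rightarrow> real) \<Rightarrow> bool" where
  "finsler_metric U F \<longleftrightarrow>
     open U \<and>
     smooth_on (U \<times> (UNIV - {0})) (\<lambda>(x, y). F x y) \<and>
     (\<forall>x\<in>U. \<forall>y. y \<noteq> 0 \<longrightarrow> F x y > 0) \<and>
     (\<forall>x\<in>U. \<forall>y. \<forall>c::real. c > 0 \<longrightarrow> F x (c *\<^sub>R y) = c * F x y) \<and>
     (\<forall>x\<in>U. \<forall>y. y \<noteq> 0 \<longrightarrow>
        (\<forall>v. v \<noteq> 0 \<longrightarrow> (\<Sum>i\<in>UNIV. \<Sum>j\<in>UNIV. fund_tensor F x y i j * v$i * v$j) > 0))"

definition spray :: "(real^'n \<Rightarrow> real^'n \<Rightarrow> real) \<Rightarrow> real^'n \<Rightarrow> real^'n \<Rightarrow> 'n \<Rightarrow> real" where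
  "spray F x y i = 1/4 * (\<Sum>l\<in>UNIV. ginv F x y i l *
      ((\<Sum>k\<in>UNIV. pd (\<lambda>y'. pd (\<lambda>x'. (F x' y')^2) k x) l y * y$k)
        - pd (\<lambda>x'. (F x' y)^2) l x))"

definition landsberg :: "(real^'n \<Rightarrow> real^'n \<Rightarrow> real) \<Rightarrow> real^'n \<Rightarrow> real^'n \<Rightarrow> 'n \<Rightarrow> 'n \<Rightarrow> 'n \<Rightarrow> real" where
  "landsberg F x y i j k = - 1/2 * F x y * (\<Sum>l\<in>UNIV. pd (\<lambda>y'. F x y') l y *
      pd (\<lambda>y1. pd (\<lambda>y2. pd (\<lambda>y3. spray F x y3 l) k y2) j y1) i y)"

definition mean_landsberg :: "(real^'n \<Rightarrow> real^'n \<Rightarrow> real) \<Rightarrow> real^'n \<Rightarrow> real^'n \<Rightarrow> 'n \<Rightarrow> real" where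
  "mean_landsberg F x y i = (\<Sum>j\<in>UNIV. \<Sum>k\<in>UNIV. ginv F x y j k * landsberg F x y i j k)"

definition sph_metric :: "(real \<Rightarrow> real \<Rightarrow> real) \<Rightarrow> real^'n \<Rightarrow> real^'n \<Rightarrow> real" where
  "sph_metric \<phi> x y = norm y * \<phi> (norm x) ((x \<bullet> y) / norm y)"

definition L1 :: "(real \<Rightarrow> real \<Rightarrow> real) \<Rightarrow> (real \<Rightarrow> real \<Rightarrow> real) \<Rightarrow> (real \<Rightarrow> real \<Rightarrow> real)
                  \<Rightarrow> real \<Rightarrow> real \<Rightarrow> real" where
  "L1 \<phi> P Q r s = 3 * ds \<phi> r s * ds (ds P) r s + \<phi> r s * ds (ds (ds P)) r s
      + (s * \<phi> r s + (r^2 - s^2) * ds \<phi> r s) * ds (ds (ds Q)) r s"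

definition L2 :: "(real \<Rightarrow> real \<Rightarrow> real) \<Rightarrow> (real \<Rightarrow> real \<Rightarrow> real) \<Rightarrow> (real \<Rightarrow> real \<Rightarrow> real)
                  \<Rightarrow> real \<Rightarrow> real \<Rightarrow> real" where
  "L2 \<phi> P Q r s = - s * \<phi> r s * ds (ds P) r s + ds \<phi> r s * (P r s - s * ds P r s)
      + (s * \<phi> r s + (r^2 - s^2) * ds \<phi> r s) * (ds Q r s - s * ds (ds Q) r s)"

definition Hcoef :: "nat \<Rightarrow> (real \<Rightarrow> real \<Rightarrow> real) \<Rightarrow> (real \<Rightarrow> real \<Rightarrow> real) \<Rightarrow> (real \<Rightarrow> real \<Rightarrow> real)
                  \<Rightarrow> real \<Rightarrow> real \<Rightarrow> real" where
  "Hcoef n \<phi> P Q r s =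
     - ((r^2 - s^2) * (\<phi> r s - s * ds \<phi> r s) * L1 \<phi> P Q r s
        + ((real n + 1) * (\<phi> r s - s * ds \<phi> r s) + (real n - 2) * (r^2 - s^2) * ds (ds \<phi>) r s)
          * L2 \<phi> P Q r s)
     / (2 * (\<phi> r s - s * ds \<phi> r s) * (\<phi> r s - s * ds \<phi> r s + (r^2 - s^2) * ds (ds \<phi>) r s))"

end

theory Submission
  imports Defs
begin

lemma pd_hasderiv:
  fixes f :: "real^'n \<Rightarrow> real"
  assumes "(f has_derivative f') (at y)"
  shows "pd f i y = f' (axis i 1)"
proof -
  let ?w = "axis i (1::real) :: real^'n"
  have l: "linear f'" using assms has_derivative_linear by blast
  have h1: "((\<lambda>t::real. y + t *\<^sub>R ?w) has_derivative (\<lambda>t. t *\<^sub>R ?w)) (at 0)"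
    by (auto intro!: derivative_eq_intros)
  have h2: "(f has_derivative f') (at ((\<lambda>t::real. y + t *\<^sub>R ?w) 0))" using assms by simp
  have "((\<lambda>t. f (y + t *\<^sub>R ?w)) has_derivative (\<lambda>t. f' (t *\<^sub>R ?w))) (at 0)"
    using has_derivative_compose[OF h1 h2] by simp
  moreover have "(\<lambda>t. f' (t *\<^sub>R ?w)) = (\<lambda>t. f' ?w * t)"
    using l by (simp add: linear_scale mult.commute)
  ultimately have "((\<lambda>t. f (y + t *\<^sub>R ?w)) has_real_derivative f' ?w) (at 0)"
    by (simp add: has_field_derivative_def)
  then show ?thesis unfolding pd_def pdir_def by (rule DERIV_imp_deriv)
qed

lemma pd_via:
  fixes f g :: "real^'n \<Rightarrow> real"
  assumes "open S" "y \<in> S" "\<And>z. z \<in> S \<Longrightarrow> g z = f z" "(g has_derivative g') (at y)"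
  shows "pd f i y = g' (axis i 1)"
proof -
  have "(f has_derivative g') (at y)"
    using has_derivative_transform_within_open[OF assms(4) assms(1) assms(2)] assms(3) by blast
  then show ?thesis by (rule pd_hasderiv)
qed

lemma pds_rep_pt:
  "pds (\<lambda>(a, b). \<phi> a b) (replicate k (0::real, 1::real)) (a, b) = (ds ^^ k) \<phi> a b"
proof (induction k arbitrary: a b)
  case 0
  then show ?case by simp
next
  case (Suc k)
  have "pds (\<lambda>(a, b). \<phi> a b) (replicate (Suc k) (0, 1)) (a, b)
        = deriv (\<lambda>t. (ds ^^ k) \<phi> a (b + t)) 0"
    using Suc by (simp add: pdir_def)
  also have "\<dots> = deriv (\<lambda>t. (ds ^^ k) \<phi> a t) b"
    unfolding deriv_def using DERIV_shift[of "(ds ^^ k) \<phi> a" _ 0 b]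
    by (simp add: add.commute)
  also have "\<dots> = (ds ^^ Suc k) \<phi> a b" by (simp add: ds_def)
  finally show ?case .
qed

lemma pds_rep:
  "pds (\<lambda>(a, b). \<phi> a b) (replicate k (0::real, 1::real)) = (\<lambda>(a, b). (ds ^^ k) \<phi> a b)"
  by (auto simp: pds_rep_pt)

lemma smooth_deriv:
  assumes "smooth_on D (\<lambda>(r, s). \<phi> r s)" "(r, t) \<in> D"
  shows "((\<lambda>t. (ds ^^ k) \<phi> r t) has_real_derivative (ds ^^ Suc k) \<phi> r t) (at t)"
proof -
  have sub: "set (replicate k (0::real, 1::real)) \<subseteq> Basis" by (auto simp: Basis_prod_def)
  have od: "open D" and dif: "pds (\<lambda>(r, s). \<phi> r s) (replicate k (0, 1)) differentiable_on D"
    using assms(1) sub unfolding smooth_on_def by auto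
  then have "(\<lambda>(a, b). (ds ^^ k) \<phi> a b) differentiable at (r, t)"
    using assms(2) by (simp add: pds_rep differentiable_on_eq_differentiable_at)
  moreover have "(\<lambda>\<tau>::real. (r, \<tau>)) differentiable at t"
    by (auto intro!: derivative_intros simp: differentiable_def)
  ultimately have "((\<lambda>(a, b). (ds ^^ k) \<phi> a b) \<circ> (\<lambda>\<tau>. (r, \<tau>))) differentiable at t"
    using differentiable_chain_at by fastforce
  then have "(\<lambda>\<tau>. (ds ^^ k) \<phi> r \<tau>) differentiable at t" by (simp add: o_def)
  then have "((\<lambda>\<tau>. (ds ^^ k) \<phi> r \<tau>) has_real_derivative deriv (\<lambda>\<tau>. (ds ^^ k) \<phi> r \<tau>) t) (at t)"
    using DERIV_deriv_iff_real_differentiable by blast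
  then show ?thesis by (simp add: ds_def)
qed

definition Mf :: "real^'n \<Rightarrow> real^'n \<Rightarrow> real \<Rightarrow> real \<Rightarrow> real \<Rightarrow> real \<Rightarrow> real \<Rightarrow> real^'n^'n" where
  "Mf a b c k1 k2 k3 k4 = (\<chi> i j. c * (if i = j then 1 else 0) + k1 * (a$i * a$j) + k2 * (a$i * b$j)
      + k3 * (b$i * a$j) + k4 * (b$i * b$j))"

lemma inner_sum_eq: "(\<Sum>j\<in>UNIV. a $ j * b $ j) = (a::real^'n) \<bullet> b"
  by (simp add: inner_vec_def)

lemma sum_delta_l:
  fixes i :: "'n::finite"
  shows "(\<Sum>k\<in>UNIV. (if i = k then 1 else 0) * (f k :: real)) = f i"
proof -
  have "(\<Sum>k\<in>UNIV. (if i = k then 1 else 0) * f k) = (\<Sum>k\<in>UNIV. if i = k then f k else 0)"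
    by (rule sum.cong) auto
  also have "\<dots> = f i" by simp
  finally show ?thesis .
qed

lemma sum_delta_r:
  fixes j :: "'n::finite"
  shows "(\<Sum>k\<in>UNIV. (f k :: real) * (if k = j then 1 else 0)) = f j"
proof -
  have "(\<Sum>k\<in>UNIV. f k * (if k = j then 1 else 0)) = (\<Sum>k\<in>UNIV. if k = j then f k else 0)"
    by (rule sum.cong) auto
  also have "\<dots> = f j" by simp
  finally show ?thesis .
qed

lemma Mf_entry: "Mf a b c k1 k2 k3 k4 $ i $ j = c * (if i = j then 1 else 0)
   + (a$i *\<^sub>R (k1 *\<^sub>R a + k2 *\<^sub>R b) + b$i *\<^sub>R (k3 *\<^sub>R a + k4 *\<^sub>R b)) $ j"
  by (simp add: Mf_def algebra_simps)

lemma Mf_entry': "Mf a b c k1 k2 k3 k4 $ i $ j = c * (if i = j then 1 else 0)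
   + (a$j *\<^sub>R (k1 *\<^sub>R a + k3 *\<^sub>R b) + b$j *\<^sub>R (k2 *\<^sub>R a + k4 *\<^sub>R b)) $ i"
  by (simp add: Mf_def algebra_simps)

lemma Mf_mult:
  fixes a b :: "real^'n"
  shows "Mf a b c1 k1 k2 k3 k4 ** Mf a b c2 m1 m2 m3 m4 = Mf a b (c1*c2)
    (c1*m1 + c2*k1 + k1*m1*(a\<bullet>a) + k1*m3*(a\<bullet>b) + k2*m1*(a\<bullet>b) + k2*m3*(b\<bullet>b))
    (c1*m2 + c2*k2 + k1*m2*(a\<bullet>a) + k1*m4*(a\<bullet>b) + k2*m2*(a\<bullet>b) + k2*m4*(b\<bullet>b))
    (c1*m3 + c2*k3 + k3*m1*(a\<bullet>a) + k3*m3*(a\<bullet>b) + k4*m1*(a\<bullet>b) + k4*m3*(b\<bullet>b))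
    (c1*m4 + c2*k4 + k3*m2*(a\<bullet>a) + k3*m4*(a\<bullet>b) + k4*m2*(a\<bullet>b) + k4*m4*(b\<bullet>b))"
proof -
  { fix i j
    define V1 where "V1 = a$i *\<^sub>R (k1 *\<^sub>R a + k2 *\<^sub>R b) + b$i *\<^sub>R (k3 *\<^sub>R a + k4 *\<^sub>R b)"
    define V2 where "V2 = a$j *\<^sub>R (m1 *\<^sub>R a + m3 *\<^sub>R b) + b$j *\<^sub>R (m2 *\<^sub>R a + m4 *\<^sub>R b)"
    have "(Mf a b c1 k1 k2 k3 k4 ** Mf a b c2 m1 m2 m3 m4) $ i $ j
       = (\<Sum>k\<in>UNIV. (c1 * (if i = k then 1 else 0) + V1 $ k) * (c2 * (if k = j then 1 else 0) + V2 $ k))"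
      unfolding matrix_matrix_mult_def V1_def V2_def
      by (simp add: Mf_entry[of a b c1] Mf_entry'[of a b c2])
    also have "\<dots> = (\<Sum>k\<in>UNIV. c1 * c2 * ((if i = k then 1 else 0) * (if k = j then 1 else 0)))
        + c1 * (\<Sum>k\<in>UNIV. (if i = k then 1 else 0) * V2 $ k)
        + c2 * (\<Sum>k\<in>UNIV. V1 $ k * (if k = j then 1 else 0))
        + (\<Sum>k\<in>UNIV. V1 $ k * V2 $ k)"
      by (simp add: algebra_simps sum.distrib sum_distrib_left)
    also have "\<dots> = c1 * c2 * (if i = j then 1 else 0) + c1 * V2 $ i + c2 * V1 $ j + V1 \<bullet> V2"
      by (simp add: sum_delta_l sum_delta_r inner_vec_def sum_distrib_left[symmetric])
    also have "\<dots> = Mf a b (c1*c2)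
    (c1*m1 + c2*k1 + k1*m1*(a\<bullet>a) + k1*m3*(a\<bullet>b) + k2*m1*(a\<bullet>b) + k2*m3*(b\<bullet>b))
    (c1*m2 + c2*k2 + k1*m2*(a\<bullet>a) + k1*m4*(a\<bullet>b) + k2*m2*(a\<bullet>b) + k2*m4*(b\<bullet>b))
    (c1*m3 + c2*k3 + k3*m1*(a\<bullet>a) + k3*m3*(a\<bullet>b) + k4*m1*(a\<bullet>b) + k4*m3*(b\<bullet>b))
    (c1*m4 + c2*k4 + k3*m2*(a\<bullet>a) + k3*m4*(a\<bullet>b) + k4*m2*(a\<bullet>b) + k4*m4*(b\<bullet>b)) $ i $ j"
      unfolding V1_def V2_def Mf_def
      by (simp add: inner_add_left inner_add_right inner_commute[of b a] algebra_simps)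
    finally have "(Mf a b c1 k1 k2 k3 k4 ** Mf a b c2 m1 m2 m3 m4) $ i $ j = \<dots>" .
  }
  then show ?thesis by (simp add: vec_eq_iff)
qed

lemma mat1_Mf: "mat 1 = Mf a b 1 0 0 0 0"
  by (simp add: Mf_def mat_def vec_eq_iff)

lemma matrix_inv_eq:
  fixes A B :: "real^'n^'n"
  assumes "A ** B = mat 1" "B ** A = mat 1"
  shows "matrix_inv A = B"
proof -
  have ex: "\<exists>A'. A ** A' = mat 1 \<and> A' ** A = mat 1" using assms by blast
  define C where "C = matrix_inv A"
  have C: "A ** C = mat 1 \<and> C ** A = mat 1"
    unfolding C_def matrix_inv_def by (rule someI_ex[OF ex])
  have "C = C ** (A ** B)" by (simp add: assms matrix_mul_rid)
  also have "\<dots> = (C ** A) ** B" by (simp add: matrix_mul_assoc)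
  also have "\<dots> = B" using C by (simp add: matrix_mul_lid)
  finally show ?thesis unfolding C_def .
qed

lemma Mf_qf: "(\<Sum>i\<in>UNIV. \<Sum>j\<in>UNIV. Mf a b c k1 k2 k3 k4 $ i $ j * v$i * v$j)
   = c * (v \<bullet> v) + k1 * (a \<bullet> v)^2 + (k2 + k3) * ((a \<bullet> v) * (b \<bullet> v)) + k4 * (b \<bullet> v)^2"
proof -
  have "(\<Sum>i\<in>UNIV. \<Sum>j\<in>UNIV. Mf a b c k1 k2 k3 k4 $ i $ j * v$i * v$j)
      = (\<Sum>i\<in>UNIV. c * (v$i * v$i) + (k1 * (a \<bullet> v)) * (a$i * v$i) + (k2 * (b \<bullet> v)) * (a$i * v$i)
           + (k3 * (a \<bullet> v)) * (b$i * v$i) + (k4 * (b \<bullet> v)) * (b$i * v$i))"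
  proof (rule sum.cong[OF refl])
    fix i
    have "(\<Sum>j\<in>UNIV. Mf a b c k1 k2 k3 k4 $ i $ j * v$i * v$j)
       = (\<Sum>j\<in>UNIV. c * ((if i = j then 1 else 0) * (v$i * v$j)) + (k1 * (a$i * v$i)) * (a$j * v$j)
            + (k2 * (a$i * v$i)) * (b$j * v$j) + (k3 * (b$i * v$i)) * (a$j * v$j) + (k4 * (b$i * v$i)) * (b$j * v$j))"
      by (rule sum.cong[OF refl]) (simp add: Mf_def algebra_simps)
    also have "\<dots> = c * (v$i * v$i) + (k1 * (a \<bullet> v)) * (a$i * v$i) + (k2 * (b \<bullet> v)) * (a$i * v$i)
           + (k3 * (a \<bullet> v)) * (b$i * v$i) + (k4 * (b \<bullet> v)) * (b$i * v$i)"
      unfolding sum.distrib sum_distrib_left[symmetric] inner_sum_eq sum_delta_l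
      by (simp add: algebra_simps)
    finally show "(\<Sum>j\<in>UNIV. Mf a b c k1 k2 k3 k4 $ i $ j * v$i * v$j) = \<dots>" .
  qed
  also have "\<dots> = c * (v \<bullet> v) + k1 * (a \<bullet> v)^2 + (k2 + k3) * ((a \<bullet> v) * (b \<bullet> v)) + k4 * (b \<bullet> v)^2"
    unfolding sum.distrib sum_distrib_left[symmetric] inner_sum_eq
    by (simp add: power2_eq_square algebra_simps)
  finally show ?thesis .
qed

lemma bil_expand:
  fixes B :: "real^'n \<Rightarrow> real^'n \<Rightarrow> real"
  assumes "bilinear B"
  shows "B p q = (\<Sum>j\<in>UNIV. \<Sum>k\<in>UNIV. (p$j * q$k) * B (axis j 1) (axis k 1))"
proof -
  have pe: "p = (\<Sum>j\<in>UNIV. p$j *\<^sub>R axis j 1)" and qe: "q = (\<Sum>k\<in>UNIV. q$k *\<^sub>R axis k 1)"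
    using basis_expansion[of p] basis_expansion[of q] by (simp_all add: scalar_mult_eq_scaleR)
  have "B p q = B (\<Sum>j\<in>UNIV. p$j *\<^sub>R axis j 1) (\<Sum>k\<in>UNIV. q$k *\<^sub>R axis k 1)"
    using pe qe by simp
  also have "\<dots> = (\<Sum>(j,k)\<in>UNIV \<times> UNIV. B (p$j *\<^sub>R axis j 1) (q$k *\<^sub>R axis k 1))"
    by (rule bilinear_sum[OF assms])
  also have "\<dots> = (\<Sum>j\<in>UNIV. \<Sum>k\<in>UNIV. B (p$j *\<^sub>R axis j 1) (q$k *\<^sub>R axis k 1))"
    by (simp add: sum.cartesian_product)
  also have "\<dots> = (\<Sum>j\<in>UNIV. \<Sum>k\<in>UNIV. (p$j * q$k) * B (axis j 1) (axis k 1))"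
    by (simp add: bilinear_lmul[OF assms] bilinear_rmul[OF assms] algebra_simps)
  finally show ?thesis .
qed

lemma Mf_contract:
  fixes B :: "real^'n \<Rightarrow> real^'n \<Rightarrow> real"
  assumes "bilinear B"
  shows "(\<Sum>j\<in>UNIV. \<Sum>k\<in>UNIV. Mf a b c k1 k2 k3 k4 $ j $ k * B (axis j 1) (axis k 1))
    = c * (\<Sum>j\<in>UNIV. B (axis j 1) (axis j 1)) + k1 * B a a + k2 * B a b + k3 * B b a + k4 * B b b"
proof -
  let ?B = "\<lambda>j k. B (axis j 1) (axis k 1)"
  have "(\<Sum>j\<in>UNIV. \<Sum>k\<in>UNIV. Mf a b c k1 k2 k3 k4 $ j $ k * ?B j k)
    = (\<Sum>j\<in>UNIV. \<Sum>k\<in>UNIV. c * ((if j = k then 1 else 0) * ?B j k) + k1 * ((a$j * a$k) * ?B j k)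
       + k2 * ((a$j * b$k) * ?B j k) + k3 * ((b$j * a$k) * ?B j k) + k4 * ((b$j * b$k) * ?B j k))"
    by (simp add: Mf_def algebra_simps)
  also have "\<dots> = c * (\<Sum>j\<in>UNIV. \<Sum>k\<in>UNIV. (if j = k then 1 else 0) * ?B j k)
     + k1 * (\<Sum>j\<in>UNIV. \<Sum>k\<in>UNIV. (a$j * a$k) * ?B j k) + k2 * (\<Sum>j\<in>UNIV. \<Sum>k\<in>UNIV. (a$j * b$k) * ?B j k)
     + k3 * (\<Sum>j\<in>UNIV. \<Sum>k\<in>UNIV. (b$j * a$k) * ?B j k) + k4 * (\<Sum>j\<in>UNIV. \<Sum>k\<in>UNIV. (b$j * b$k) * ?B j k)"
    unfolding sum.distrib sum_distrib_left[symmetric] by simp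
  also have "\<dots> = c * (\<Sum>j\<in>UNIV. B (axis j 1) (axis j 1)) + k1 * B a a + k2 * B a b + k3 * B b a + k4 * B b b"
    unfolding bil_expand[OF assms, symmetric] sum_delta_l by simp
  finally show ?thesis .
qed

definition bil9 :: "real \<Rightarrow> real \<Rightarrow> real \<Rightarrow> real \<Rightarrow> real \<Rightarrow> real \<Rightarrow> real \<Rightarrow> real \<Rightarrow> real \<Rightarrow> real
   \<Rightarrow> real^'n \<Rightarrow> real^'n \<Rightarrow> real^'n \<Rightarrow> real^'n \<Rightarrow> real^'n \<Rightarrow> real" where
  "bil9 cD cxx cxy cxt cyx cyy cyt ctx cty ctt a b t v w = cD * (v \<bullet> w)
    + cxx * ((a \<bullet> v) * (a \<bullet> w)) + cxy * ((a \<bullet> v) * (b \<bullet> w)) + cxt * ((a \<bullet> v) * (t \<bullet> w))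
    + cyx * ((b \<bullet> v) * (a \<bullet> w)) + cyy * ((b \<bullet> v) * (b \<bullet> w)) + cyt * ((b \<bullet> v) * (t \<bullet> w))
    + ctx * ((t \<bullet> v) * (a \<bullet> w)) + cty * ((t \<bullet> v) * (b \<bullet> w)) + ctt * ((t \<bullet> v) * (t \<bullet> w))"

lemma bil9_bilinear: "bilinear (bil9 cD cxx cxy cxt cyx cyy cyt ctx cty ctt a b t)"
  unfolding bilinear_def linear_iff bil9_def
  by (simp add: inner_add_left inner_add_right algebra_simps)

lemma bil9_trace:
  fixes a b t :: "real^'n"
  shows "(\<Sum>j\<in>UNIV. bil9 cD cxx cxy cxt cyx cyy cyt ctx cty ctt a b t (axis j 1) (axis j 1))
  = cD * real CARD('n) + cxx * (a \<bullet> a) + cxy * (a \<bullet> b) + cxt * (a \<bullet> t)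
    + cyx * (b \<bullet> a) + cyy * (b \<bullet> b) + cyt * (b \<bullet> t) + ctx * (t \<bullet> a) + cty * (t \<bullet> b) + ctt * (t \<bullet> t)"
proof -
  have "(\<Sum>j\<in>UNIV. bil9 cD cxx cxy cxt cyx cyy cyt ctx cty ctt a b t (axis j 1) (axis j 1))
    = (\<Sum>j\<in>UNIV. cD * 1 + cxx * (a$j * a$j) + cxy * (a$j * b$j) + cxt * (a$j * t$j)
      + cyx * (b$j * a$j) + cyy * (b$j * b$j) + cyt * (b$j * t$j)
      + ctx * (t$j * a$j) + cty * (t$j * b$j) + ctt * (t$j * t$j))"
    by (simp add: bil9_def inner_axis inner_axis_axis)
  also have "\<dots> = cD * real CARD('n) + cxx * (a \<bullet> a) + cxy * (a \<bullet> b) + cxt * (a \<bullet> t)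
    + cyx * (b \<bullet> a) + cyy * (b \<bullet> b) + cyt * (b \<bullet> t) + ctx * (t \<bullet> a) + cty * (t \<bullet> b) + ctt * (t \<bullet> t)"
    unfolding sum.distrib sum_distrib_left[symmetric] inner_sum_eq by simp
  finally show ?thesis .
qed

locale sph =
  fixes x :: "real^'n" and F :: "real^'n \<Rightarrow> real^'n \<Rightarrow> real"
    and f0 f1 f2 f3 p0 p1 p2 p3 q0 q1 q2 q3 :: "real \<Rightarrow> real"
  assumes F_eq: "\<And>y. F x y = norm y * f0 (inner x y / norm y)"
    and spray_eq: "\<And>y l. y \<noteq> 0 \<Longrightarrow> spray F x y l
        = norm y * p0 (inner x y / norm y) * y$l + (norm y)^2 * q0 (inner x y / norm y) * x$l"
    and df0: "\<And>t. \<bar>t\<bar> \<le> norm x \<Longrightarrow> (f0 has_real_derivative f1 t) (at t)"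
    and df1: "\<And>t. \<bar>t\<bar> \<le> norm x \<Longrightarrow> (f1 has_real_derivative f2 t) (at t)"
    and df2: "\<And>t. \<bar>t\<bar> \<le> norm x \<Longrightarrow> (f2 has_real_derivative f3 t) (at t)"
    and dp0: "\<And>t. \<bar>t\<bar> \<le> norm x \<Longrightarrow> (p0 has_real_derivative p1 t) (at t)"
    and dp1: "\<And>t. \<bar>t\<bar> \<le> norm x \<Longrightarrow> (p1 has_real_derivative p2 t) (at t)"
    and dp2: "\<And>t. \<bar>t\<bar> \<le> norm x \<Longrightarrow> (p2 has_real_derivative p3 t) (at t)"
    and dq0: "\<And>t. \<bar>t\<bar> \<le> norm x \<Longrightarrow> (q0 has_real_derivative q1 t) (at t)"
    and dq1: "\<And>t. \<bar>t\<bar> \<le> norm x \<Longrightarrow> (q1 has_real_derivative q2 t) (at t)"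
    and dq2: "\<And>t. \<bar>t\<bar> \<le> norm x \<Longrightarrow> (q2 has_real_derivative q3 t) (at t)"
begin

definition sv :: "real^'n \<Rightarrow> real" where "sv y = inner x y / norm y"
definition ay :: "real^'n \<Rightarrow> real^'n \<Rightarrow> real" where "ay y d = inner y d / norm y"
definition al :: "real^'n \<Rightarrow> real^'n" where "al y = inverse (norm y) *\<^sub>R y"
definition dsv :: "real^'n \<Rightarrow> real^'n \<Rightarrow> real" where
  "dsv y w = (inner x w - sv y * ay y w) / norm y"

lemma sv_bound: "\<bar>sv y\<bar> \<le> norm x"
proof (cases "y = 0")
  case True then show ?thesis by (simp add: sv_def)
next
  case False
  have "\<bar>inner x y\<bar> \<le> norm x * norm y" by (rule Cauchy_Schwarz_ineq2)
  then show ?thesis using False by (simp add: sv_def abs_div pos_divide_le_eq)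
qed

lemma d_norm: "y \<noteq> 0 \<Longrightarrow> (norm has_derivative (\<lambda>w. ay y w)) (at y)"
proof -
  assume y: "y \<noteq> 0"
  have "(\<lambda>w. ay y w) = (\<lambda>h. inverse (norm y) * (h \<bullet> y))"
    by (auto simp: ay_def divide_inverse inner_commute)
  then show ?thesis using has_derivative_norm[OF y] by (simp add: sgn_div_norm)
qed

lemma d_ay: "y \<noteq> 0 \<Longrightarrow> ((\<lambda>y. ay y d) has_derivative (\<lambda>v. (inner v d - ay y d * ay y v) / norm y)) (at y)"
  unfolding ay_def[abs_def]
  apply (rule has_derivative_eq_rhs)
   apply (rule derivative_eq_intros d_norm[unfolded ay_def] refl | simp)+
  apply (rule ext)
  apply (simp add: field_simps power2_eq_square)
  done

lemma d_sv: "y \<noteq> 0 \<Longrightarrow> (sv has_derivative dsv y) (at y)"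
  unfolding sv_def[abs_def]
  apply (rule has_derivative_eq_rhs)
   apply (rule derivative_eq_intros d_norm[unfolded ay_def] refl | simp)+
  apply (rule ext)
  apply (simp add: dsv_def sv_def ay_def field_simps power2_eq_square)
  done

lemma d_al: "y \<noteq> 0 \<Longrightarrow> ((\<lambda>y. al y $ l) has_derivative (\<lambda>v. (v $ l - al y $ l * ay y v) / norm y)) (at y)"
proof -
  assume y: "y \<noteq> 0"
  have e: "(\<lambda>y. al y $ l) = (\<lambda>y. y $ l / norm y)" by (auto simp: al_def divide_inverse mult.commute)
  have "((\<lambda>y. y $ l / norm y) has_derivative (\<lambda>v. (v $ l - al y $ l * ay y v) / norm y)) (at y)"
    apply (rule has_derivative_eq_rhs)
     apply (rule derivative_eq_intros d_norm bounded_linear.has_derivative[OF bounded_linear_vec_nth] refl | simp add: y)+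
    apply (rule ext)
    apply (simp add: al_def ay_def y field_simps power2_eq_square)
    done
  then show ?thesis by (simp add: e)
qed

lemma d_comp:
  assumes "(h has_real_derivative d) (at (sv y))" "y \<noteq> 0"
  shows "((\<lambda>y. h (sv y)) has_derivative (\<lambda>w. d * dsv y w)) (at y)"
proof -
  have "(h has_derivative (*) d) (at (sv y))" using assms(1) by (simp add: has_field_derivative_def)
  from has_derivative_compose[OF d_sv[OF assms(2)] this] show ?thesis .
qed

lemma d_nth: "((\<lambda>y. y $ l) has_derivative (\<lambda>v. v $ l)) (at y)"
  using bounded_linear_vec_nth by (rule bounded_linear.has_derivative) (rule has_derivative_ident)

lemmas hd = d_comp[OF df0[OF sv_bound]] d_comp[OF df1[OF sv_bound]]
  d_comp[OF dp0[OF sv_bound]] d_comp[OF dp1[OF sv_bound]] d_comp[OF dp2[OF sv_bound]]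
  d_comp[OF dq0[OF sv_bound]] d_comp[OF dq1[OF sv_bound]] d_comp[OF dq2[OF sv_bound]]

definition G0 :: "'n \<Rightarrow> real^'n \<Rightarrow> real" where
  "G0 l y = (norm y ^ 2 * (p0 (sv y))) * al y $ l +
     (norm y ^ 2 * (q0 (sv y))) * x $ l"

definition G1 :: "'n \<Rightarrow> real^'n \<Rightarrow> real^'n \<Rightarrow> real" where
  "G1 l y w = (norm y * (ay y w * p0 (sv y) - ay y w * p1 (sv y) * sv y + inner x w * p1 (sv y))) * al y $ l +
     (norm y * (2 * ay y w * q0 (sv y) - ay y w * q1 (sv y) * sv y + inner x w * q1 (sv y))) * x $ l +
     (norm y * (p0 (sv y))) * w $ l"

definition G2 :: "'n \<Rightarrow> real^'n \<Rightarrow> real^'n \<Rightarrow> real^'n \<Rightarrow> real" where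
  "G2 l y v w = ((- ay y v * ay y w * p0 (sv y) + ay y v * ay y w * p1 (sv y) * sv y + ay y v * ay y w * p2 (sv y) * sv y ^ 2 - ay y v * inner x w * p2 (sv y) * sv y - ay y w * inner x v * p2 (sv y) * sv y + inner v w * p0 (sv y) - inner v w * p1 (sv y) * sv y + inner x v * inner x w * p2 (sv y))) * al y $ l +
     ((- ay y v * ay y w * q1 (sv y) * sv y + ay y v * ay y w * q2 (sv y) * sv y ^ 2 + ay y v * inner x w * q1 (sv y) - ay y v * inner x w * q2 (sv y) * sv y + ay y w * inner x v * q1 (sv y) - ay y w * inner x v * q2 (sv y) * sv y + 2 * inner v w * q0 (sv y) - inner v w * q1 (sv y) * sv y + inner x v * inner x w * q2 (sv y))) * x $ l +
     ((ay y w * p0 (sv y) - ay y w * p1 (sv y) * sv y + inner x w * p1 (sv y))) * v $ l +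
     ((ay y v * p0 (sv y) - ay y v * p1 (sv y) * sv y + inner x v * p1 (sv y))) * w $ l"

definition g3a :: "real^'n \<Rightarrow> real^'n \<Rightarrow> real^'n \<Rightarrow> real^'n \<Rightarrow> real" where
  "g3a y t v w = (3 * ay y t * ay y v * ay y w * p0 (sv y) - 3 * ay y t * ay y v * ay y w * p1 (sv y) * sv y - 6 * ay y t * ay y v * ay y w * p2 (sv y) * sv y ^ 2 - ay y t * ay y v * ay y w * p3 (sv y) * sv y ^ 3 + 3 * ay y t * ay y v * inner x w * p2 (sv y) * sv y + ay y t * ay y v * inner x w * p3 (sv y) * sv y ^ 2 + 3 * ay y t * ay y w * inner x v * p2 (sv y) * sv y + ay y t * ay y w * inner x v * p3 (sv y) * sv y ^ 2 - ay y t * inner v w * p0 (sv y) + ay y t * inner v w * p1 (sv y) * sv y + ay y t * inner v w * p2 (sv y) * sv y ^ 2 - ay y t * inner x v * inner x w * p2 (sv y) - ay y t * inner x v * inner x w * p3 (sv y) * sv y + 3 * ay y v * ay y w * inner x t * p2 (sv y) * sv y + ay y v * ay y w * inner x t * p3 (sv y) * sv y ^ 2 - ay y v * inner t w * p0 (sv y) + ay y v * inner t w * p1 (sv y) * sv y + ay y v * inner t w * p2 (sv y) * sv y ^ 2 - ay y v * inner x t * inner x w * p2 (sv y) - ay y v * inner x t * inner x w * p3 (sv y) * sv y - ay y w * inner t v * p0 (sv y) + ay y w * inner t v * p1 (sv y) * sv y + ay y w * inner t v * p2 (sv y) * sv y ^ 2 - ay y w * inner x t * inner x v * p2 (sv y)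 - ay y w * inner x t * inner x v * p3 (sv y) * sv y - inner t v * inner x w * p2 (sv y) * sv y - inner t w * inner x v * p2 (sv y) * sv y - inner v w * inner x t * p2 (sv y) * sv y + inner x t * inner x v * inner x w * p3 (sv y)) / norm y"

definition g3x :: "real^'n \<Rightarrow> real^'n \<Rightarrow> real^'n \<Rightarrow> real^'n \<Rightarrow> real" where
  "g3x y t v w = (3 * ay y t * ay y v * ay y w * q1 (sv y) * sv y - 3 * ay y t * ay y v * ay y w * q2 (sv y) * sv y ^ 2 - ay y t * ay y v * ay y w * q3 (sv y) * sv y ^ 3 - ay y t * ay y v * inner x w * q1 (sv y) + ay y t * ay y v * inner x w * q2 (sv y) * sv y + ay y t * ay y v * inner x w * q3 (sv y) * sv y ^ 2 - ay y t * ay y w * inner x v * q1 (sv y) + ay y t * ay y w * inner x v * q2 (sv y) * sv y + ay y t * ay y w * inner x v * q3 (sv y) * sv y ^ 2 - ay y t * inner v w * q1 (sv y) * sv y + ay y t * inner v w * q2 (sv y) * sv y ^ 2 - ay y t * inner x v * inner x w * q3 (sv y) * sv y - ay y v * ay y w * inner x t * q1 (sv y) + ay y v * ay y w * inner x t * q2 (sv y) * sv y + ay y v * ay y w * inner x t * q3 (sv y) * sv y ^ 2 - ay y v * inner t w * q1 (sv y) * sv y + ay y v * inner t w * q2 (sv y) * sv y ^ 2 - ay y v * inner x t * inner x w * q3 (sv y) * sv y - ay y w * inner t v * q1 (sv y) * sv y + ay y w * inner t v * q2 (sv y) * sv y ^ 2 - ay y w * inner x t * inner x v * q3 (sv y)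 * sv y + inner t v * inner x w * q1 (sv y) - inner t v * inner x w * q2 (sv y) * sv y + inner t w * inner x v * q1 (sv y) - inner t w * inner x v * q2 (sv y) * sv y + inner v w * inner x t * q1 (sv y) - inner v w * inner x t * q2 (sv y) * sv y + inner x t * inner x v * inner x w * q3 (sv y)) / norm y"

definition g3t :: "real^'n \<Rightarrow> real^'n \<Rightarrow> real^'n \<Rightarrow> real^'n \<Rightarrow> real" where
  "g3t y t v w = (- ay y v * ay y w * p0 (sv y) + ay y v * ay y w * p1 (sv y) * sv y + ay y v * ay y w * p2 (sv y) * sv y ^ 2 - ay y v * inner x w * p2 (sv y) * sv y - ay y w * inner x v * p2 (sv y) * sv y + inner v w * p0 (sv y) - inner v w * p1 (sv y) * sv y + inner x v * inner x w * p2 (sv y)) / norm y"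

definition g3v :: "real^'n \<Rightarrow> real^'n \<Rightarrow> real^'n \<Rightarrow> real^'n \<Rightarrow> real" where
  "g3v y t v w = (- ay y t * ay y w * p0 (sv y) + ay y t * ay y w * p1 (sv y) * sv y + ay y t * ay y w * p2 (sv y) * sv y ^ 2 - ay y t * inner x w * p2 (sv y) * sv y - ay y w * inner x t * p2 (sv y) * sv y + inner t w * p0 (sv y) - inner t w * p1 (sv y) * sv y + inner x t * inner x w * p2 (sv y)) / norm y"

definition g3w :: "real^'n \<Rightarrow> real^'n \<Rightarrow> real^'n \<Rightarrow> real^'n \<Rightarrow> real" where
  "g3w y t v w = (- ay y t * ay y v * p0 (sv y) + ay y t * ay y v * p1 (sv y) * sv y + ay y t * ay y v * p2 (sv y) * sv y ^ 2 - ay y t * inner x v * p2 (sv y) * sv y - ay y v * inner x t * p2 (sv y) * sv y + inner t v * p0 (sv y) - inner t v * p1 (sv y) * sv y + inner x t * inner x v * p2 (sv y)) / norm y"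

definition G3 :: "'n \<Rightarrow> real^'n \<Rightarrow> real^'n \<Rightarrow> real^'n \<Rightarrow> real^'n \<Rightarrow> real" where
  "G3 l y t v w = g3a y t v w * al y $ l + g3x y t v w * x $ l + g3t y t v w * t $ l + g3v y t v w * v $ l + g3w y t v w * w $ l"

definition Fd :: "real^'n \<Rightarrow> real^'n \<Rightarrow> real" where
  "Fd y w = (ay y w * f0 (sv y) - ay y w * f1 (sv y) * sv y + inner x w * f1 (sv y))"

definition K1 :: "real^'n \<Rightarrow> real^'n \<Rightarrow> real" where
  "K1 y w = norm y * (- 2 * ay y w * f0 (sv y) * f1 (sv y) * sv y + 2 * ay y w * f0 (sv y) ^ 2 + 2 * inner x w * f0 (sv y) * f1 (sv y))"

definition K2 :: "real^'n \<Rightarrow> real^'n \<Rightarrow> real^'n \<Rightarrow> real" where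
  "K2 y v w = (- 2 * ay y v * ay y w * f0 (sv y) * f1 (sv y) * sv y + 2 * ay y v * ay y w * f0 (sv y) * f2 (sv y) * sv y ^ 2 + 2 * ay y v * ay y w * f1 (sv y) ^ 2 * sv y ^ 2 + 2 * ay y v * inner x w * f0 (sv y) * f1 (sv y) - 2 * ay y v * inner x w * f0 (sv y) * f2 (sv y) * sv y - 2 * ay y v * inner x w * f1 (sv y) ^ 2 * sv y + 2 * ay y w * inner x v * f0 (sv y) * f1 (sv y) - 2 * ay y w * inner x v * f0 (sv y) * f2 (sv y) * sv y - 2 * ay y w * inner x v * f1 (sv y) ^ 2 * sv y - 2 * inner v w * f0 (sv y) * f1 (sv y) * sv y + 2 * inner v w * f0 (sv y) ^ 2 + 2 * inner x v * inner x w * f0 (sv y) * f2 (sv y) + 2 * inner x v * inner x w * f1 (sv y) ^ 2)"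

definition CD :: "real^'n \<Rightarrow> real^'n \<Rightarrow> real" where
  "CD y t = (ay y t * f0 (sv y) * p2 (sv y) * sv y ^ 2 - ay y t * f0 (sv y) * q1 (sv y) * sv y ^ 2 + ay y t * f0 (sv y) * q2 (sv y) * sv y ^ 3 - ay y t * f1 (sv y) * p0 (sv y) * sv y + ay y t * f1 (sv y) * p1 (sv y) * sv y ^ 2 - ay y t * f1 (sv y) * q1 (sv y) * inner x x * sv y + ay y t * f1 (sv y) * q1 (sv y) * sv y ^ 3 + ay y t * f1 (sv y) * q2 (sv y) * inner x x * sv y ^ 2 - ay y t * f1 (sv y) * q2 (sv y) * sv y ^ 4 - inner x t * f0 (sv y) * p2 (sv y) * sv y + inner x t * f0 (sv y) * q1 (sv y) * sv y - inner x t * f0 (sv y) * q2 (sv y) * sv y ^ 2 + inner x t * f1 (sv y) * p0 (sv y) - inner x t * f1 (sv y) * p1 (sv y) * sv y + inner x t * f1 (sv y) * q1 (sv y) * inner x x - inner x t * f1 (sv y) * q1 (sv y) * sv y ^ 2 - inner x t * f1 (sv y) * q2 (sv y) * inner x x * sv y + inner x t * f1 (sv y) * q2 (sv y) * sv y ^ 3) / norm y"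

definition Cxx :: "real^'n \<Rightarrow> real^'n \<Rightarrow> real" where
  "Cxx y t = (- ay y t * f0 (sv y) * p3 (sv y) * sv y - ay y t * f0 (sv y) * q3 (sv y) * sv y ^ 2 - 3 * ay y t * f1 (sv y) * p2 (sv y) * sv y - ay y t * f1 (sv y) * q3 (sv y) * inner x x * sv y + ay y t * f1 (sv y) * q3 (sv y) * sv y ^ 3 + inner x t * f0 (sv y) * p3 (sv y) + inner x t * f0 (sv y) * q3 (sv y) * sv y + 3 * inner x t * f1 (sv y) * p2 (sv y) + inner x t * f1 (sv y) * q3 (sv y) * inner x x - inner x t * f1 (sv y) * q3 (sv y) * sv y ^ 2) / norm y"

definition Cxb :: "real^'n \<Rightarrow> real^'n \<Rightarrow> real" where
  "Cxb y t = (ay y t * f0 (sv y) * p2 (sv y) * sv y + ay y t * f0 (sv y) * p3 (sv y) * sv y ^ 2 - ay y t * f0 (sv y) * q1 (sv y) * sv y + ay y t * f0 (sv y) * q2 (sv y) * sv y ^ 2 + ay y t * f0 (sv y) * q3 (sv y) * sv y ^ 3 - ay y t * f1 (sv y) * p0 (sv y) + ay y t * f1 (sv y) * p1 (sv y) * sv y + 3 * ay y t * f1 (sv y) * p2 (sv y) * sv y ^ 2 - ay y t * f1 (sv y) * q1 (sv y) * inner x x + ay y t * f1 (sv y) * q1 (sv y) * sv y ^ 2 + ay y t * f1 (sv y) * q2 (sv y) * inner x x * sv y - ay y t * f1 (sv y) * q2 (sv y) * sv y ^ 3 + ay y t * f1 (sv y) * q3 (sv y) * inner x x * sv y ^ 2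 - ay y t * f1 (sv y) * q3 (sv y) * sv y ^ 4 - inner x t * f0 (sv y) * p3 (sv y) * sv y - inner x t * f0 (sv y) * q3 (sv y) * sv y ^ 2 - 3 * inner x t * f1 (sv y) * p2 (sv y) * sv y - inner x t * f1 (sv y) * q3 (sv y) * inner x x * sv y + inner x t * f1 (sv y) * q3 (sv y) * sv y ^ 3) / norm y"

definition Cxt :: "real^'n \<Rightarrow> real^'n \<Rightarrow> real" where
  "Cxt y t = (- f0 (sv y) * p2 (sv y) * sv y + f0 (sv y) * q1 (sv y) * sv y - f0 (sv y) * q2 (sv y) * sv y ^ 2 + f1 (sv y) * p0 (sv y) - f1 (sv y) * p1 (sv y) * sv y + f1 (sv y) * q1 (sv y) * inner x x - f1 (sv y) * q1 (sv y) * sv y ^ 2 - f1 (sv y) * q2 (sv y) * inner x x * sv y + f1 (sv y) * q2 (sv y) * sv y ^ 3) / norm y"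

definition Cbx :: "real^'n \<Rightarrow> real^'n \<Rightarrow> real" where
  "Cbx y t = (ay y t * f0 (sv y) * p2 (sv y) * sv y + ay y t * f0 (sv y) * p3 (sv y) * sv y ^ 2 - ay y t * f0 (sv y) * q1 (sv y) * sv y + ay y t * f0 (sv y) * q2 (sv y) * sv y ^ 2 + ay y t * f0 (sv y) * q3 (sv y) * sv y ^ 3 - ay y t * f1 (sv y) * p0 (sv y) + ay y t * f1 (sv y) * p1 (sv y) * sv y + 3 * ay y t * f1 (sv y) * p2 (sv y) * sv y ^ 2 - ay y t * f1 (sv y) * q1 (sv y) * inner x x + ay y t * f1 (sv y) * q1 (sv y) * sv y ^ 2 + ay y t * f1 (sv y) * q2 (sv y) * inner x x * sv y - ay y t * f1 (sv y) * q2 (sv y) * sv y ^ 3 + ay y t * f1 (sv y) * q3 (sv y) * inner x x * sv y ^ 2 - ay y t * f1 (sv y) * q3 (sv y) * sv y ^ 4 - inner x t * f0 (sv y) * p3 (sv y) * sv y - inner x t * f0 (sv y) * q3 (sv y) * sv y ^ 2 - 3 * inner x t * f1 (sv y) * p2 (sv y) * sv y - inner x t * f1 (sv y) * q3 (sv y) * inner x x * sv y + inner x t * f1 (sv y) * q3 (sv y) * sv y ^ 3) / norm y"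

definition Cbb :: "real^'n \<Rightarrow> real^'n \<Rightarrow> real" where
  "Cbb y t = (- 3 * ay y t * f0 (sv y) * p2 (sv y) * sv y ^ 2 - ay y t * f0 (sv y) * p3 (sv y) * sv y ^ 3 + 3 * ay y t * f0 (sv y) * q1 (sv y) * sv y ^ 2 - 3 * ay y t * f0 (sv y) * q2 (sv y) * sv y ^ 3 - ay y t * f0 (sv y) * q3 (sv y) * sv y ^ 4 + 3 * ay y t * f1 (sv y) * p0 (sv y) * sv y - 3 * ay y t * f1 (sv y) * p1 (sv y) * sv y ^ 2 - 3 * ay y t * f1 (sv y) * p2 (sv y) * sv y ^ 3 + 3 * ay y t * f1 (sv y) * q1 (sv y) * inner x x * sv y - 3 * ay y t * f1 (sv y) * q1 (sv y) * sv y ^ 3 - 3 * ay y t * f1 (sv y) * q2 (sv y) * inner x x * sv y ^ 2 + 3 * ay y t * f1 (sv y) * q2 (sv y) * sv y ^ 4 - ay y t * f1 (sv y) * q3 (sv y) * inner x x * sv y ^ 3 + ay y t * f1 (sv y) * q3 (sv y) * sv y ^ 5 + inner x t * f0 (sv y) * p2 (sv y) * sv y + inner x t * f0 (sv y) * p3 (sv y) * sv y ^ 2 - inner x t * f0 (sv y) * q1 (sv y) * sv y + inner x t * f0 (sv y) * q2 (sv y) * sv y ^ 2 + inner x t * f0 (sv y) * q3 (sv y) * sv y ^ 3 - inner x t * f1 (sv y) * p0 (sv y) + inner x t * f1 (sv y) * p1 (sv y) * sv y + 3 * inner x t * f1 (sv y) * p2 (sv y) * sv y ^ 2 - inner x t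 * f1 (sv y) * q1 (sv y) * inner x x + inner x t * f1 (sv y) * q1 (sv y) * sv y ^ 2 + inner x t * f1 (sv y) * q2 (sv y) * inner x x * sv y - inner x t * f1 (sv y) * q2 (sv y) * sv y ^ 3 + inner x t * f1 (sv y) * q3 (sv y) * inner x x * sv y ^ 2 - inner x t * f1 (sv y) * q3 (sv y) * sv y ^ 4) / norm y"

definition Cbt :: "real^'n \<Rightarrow> real^'n \<Rightarrow> real" where
  "Cbt y t = (f0 (sv y) * p2 (sv y) * sv y ^ 2 - f0 (sv y) * q1 (sv y) * sv y ^ 2 + f0 (sv y) * q2 (sv y) * sv y ^ 3 - f1 (sv y) * p0 (sv y) * sv y + f1 (sv y) * p1 (sv y) * sv y ^ 2 - f1 (sv y) * q1 (sv y) * inner x x * sv y + f1 (sv y) * q1 (sv y) * sv y ^ 3 + f1 (sv y) * q2 (sv y) * inner x x * sv y ^ 2 - f1 (sv y) * q2 (sv y) * sv y ^ 4) / norm y"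

definition Ctx :: "real^'n \<Rightarrow> real^'n \<Rightarrow> real" where
  "Ctx y t = (- f0 (sv y) * p2 (sv y) * sv y + f0 (sv y) * q1 (sv y) * sv y - f0 (sv y) * q2 (sv y) * sv y ^ 2 + f1 (sv y) * p0 (sv y) - f1 (sv y) * p1 (sv y) * sv y + f1 (sv y) * q1 (sv y) * inner x x - f1 (sv y) * q1 (sv y) * sv y ^ 2 - f1 (sv y) * q2 (sv y) * inner x x * sv y + f1 (sv y) * q2 (sv y) * sv y ^ 3) / norm y"

definition Ctb :: "real^'n \<Rightarrow> real^'n \<Rightarrow> real" where
  "Ctb y t = (f0 (sv y) * p2 (sv y) * sv y ^ 2 - f0 (sv y) * q1 (sv y) * sv y ^ 2 + f0 (sv y) * q2 (sv y) * sv y ^ 3 - f1 (sv y) * p0 (sv y) * sv y + f1 (sv y) * p1 (sv y) * sv y ^ 2 - f1 (sv y) * q1 (sv y) * inner x x * sv y + f1 (sv y) * q1 (sv y) * sv y ^ 3 + f1 (sv y) * q2 (sv y) * inner x x * sv y ^ 2 - f1 (sv y) * q2 (sv y) * sv y ^ 4) / norm y"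

definition Ctt :: "real^'n \<Rightarrow> real^'n \<Rightarrow> real" where
  "Ctt y t = 0"

lemma HG0: "y \<noteq> 0 \<Longrightarrow> ((\<lambda>y. G0 l y) has_derivative (\<lambda>w. G1 l y w)) (at y)"
  unfolding G0_def
  apply (rule has_derivative_eq_rhs)
   apply (rule derivative_eq_intros d_norm d_sv d_ay d_al d_nth hd refl | assumption | (simp; fail))+
  apply (rule ext)
  apply (subgoal_tac "norm y \<noteq> 0")
   apply (simp add: G1_def dsv_def divide_simps)
   apply (simp add: algebra_simps power_numeral_reduce)
  apply simp
  done

lemma HG1: "y \<noteq> 0 \<Longrightarrow> ((\<lambda>y. G1 l y w) has_derivative (\<lambda>v. G2 l y v w)) (at y)"
  unfolding G1_def
  apply (rule has_derivative_eq_rhs)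
   apply (rule derivative_eq_intros d_norm d_sv d_ay d_al d_nth hd refl | assumption | (simp; fail))+
  apply (rule ext)
  apply (subgoal_tac "norm y \<noteq> 0")
   apply (simp add: G2_def dsv_def divide_simps)
   apply (simp add: algebra_simps power_numeral_reduce)
  apply simp
  done

lemma HG2: "y \<noteq> 0 \<Longrightarrow> ((\<lambda>y. G2 l y v w) has_derivative (\<lambda>t. G3 l y t v w)) (at y)"
  unfolding G2_def
  apply (rule has_derivative_eq_rhs)
   apply (rule derivative_eq_intros d_norm d_sv d_ay d_al d_nth hd refl | assumption | (simp; fail))+
  apply (rule ext)
  apply (subgoal_tac "norm y \<noteq> 0")
   apply (simp add: G3_def g3a_def g3x_def g3t_def g3v_def g3w_def dsv_def divide_simps)
   apply (simp add: algebra_simps power_numeral_reduce)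
  apply simp
  done

lemma HF: "y \<noteq> 0 \<Longrightarrow> ((\<lambda>y. norm y * f0 (sv y)) has_derivative (\<lambda>w. Fd y w)) (at y)"
  apply (rule has_derivative_eq_rhs)
   apply (rule derivative_eq_intros d_norm d_sv d_ay d_al d_nth hd refl | assumption | (simp; fail))+
  apply (rule ext)
  apply (subgoal_tac "norm y \<noteq> 0")
   apply (simp add: Fd_def dsv_def divide_simps)
   apply (simp add: algebra_simps power_numeral_reduce)
  apply simp
  done

lemma HK0: "y \<noteq> 0 \<Longrightarrow> ((\<lambda>y. (norm y * f0 (sv y))^2) has_derivative (\<lambda>w. K1 y w)) (at y)"
  apply (rule has_derivative_eq_rhs)
   apply (rule derivative_eq_intros d_norm d_sv d_ay d_al d_nth hd refl | assumption | (simp; fail))+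
  apply (rule ext)
  apply (subgoal_tac "norm y \<noteq> 0")
   apply (simp add: K1_def dsv_def divide_simps)
   apply (simp add: algebra_simps power_numeral_reduce)
  apply simp
  done

lemma HK1: "y \<noteq> 0 \<Longrightarrow> ((\<lambda>y. K1 y w) has_derivative (\<lambda>v. K2 y v w)) (at y)"
  unfolding K1_def
  apply (rule has_derivative_eq_rhs)
   apply (rule derivative_eq_intros d_norm d_sv d_ay d_al d_nth hd refl | assumption | (simp; fail))+
  apply (rule ext)
  apply (subgoal_tac "norm y \<noteq> 0")
   apply (simp add: K2_def dsv_def divide_simps)
   apply (simp add: algebra_simps power_numeral_reduce)
  apply simp
  done

end

lemma contr5: "(\<Sum>l\<in>UNIV. (al * y $ l + be * x $ l) * (c1 * y $ l + c2 * x $ l + c3 * t $ l + c4 * v $ l + c5 * w $ l))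
  = al * (c1 * (y \<bullet> y) + c2 * (y \<bullet> x) + c3 * (y \<bullet> t) + c4 * (y \<bullet> v) + c5 * (y \<bullet> w))
  + be * (c1 * (x \<bullet> y) + c2 * (x \<bullet> x) + c3 * (x \<bullet> t) + c4 * (x \<bullet> v) + c5 * (x \<bullet> w))"
  (is "?L = ?R")
proof -
  have "?L = (\<Sum>l\<in>UNIV. (al*c1) * (y $ l * y $ l) + (al*c2) * (y $ l * x $ l) + (al*c3) * (y $ l * t $ l)
     + (al*c4) * (y $ l * v $ l) + (al*c5) * (y $ l * w $ l) + (be*c1) * (x $ l * y $ l) + (be*c2) * (x $ l * x $ l)
     + (be*c3) * (x $ l * t $ l) + (be*c4) * (x $ l * v $ l) + (be*c5) * (x $ l * w $ l))"
    by (rule sum.cong[OF refl]) (simp add: algebra_simps)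
  also have "\<dots> = ?R"
    unfolding sum.distrib sum_distrib_left[symmetric] inner_sum_eq by (simp add: algebra_simps)
  finally show ?thesis .
qed

context sph begin

lemma open_nz: "open (UNIV - {0::real^'n})" by (simp add: open_Diff)

lemma al_nth: "al y $ l = y $ l / norm y"
  by (simp add: al_def divide_inverse mult.commute)

lemma spray1: "y \<noteq> 0 \<Longrightarrow> pd (\<lambda>y3. spray F x y3 l) k y = G1 l y (axis k 1)"
  by (rule pd_via[OF open_nz _ _ HG0]) (auto simp: G0_def spray_eq sv_def al_nth power2_eq_square)

lemma spray2: "y \<noteq> 0 \<Longrightarrow> pd (\<lambda>y2. pd (\<lambda>y3. spray F x y3 l) k y2) j y = G2 l y (axis j 1) (axis k 1)"
  by (rule pd_via[OF open_nz _ _ HG1]) (auto simp: spray1)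

lemma spray3: "y \<noteq> 0 \<Longrightarrow> pd (\<lambda>y1. pd (\<lambda>y2. pd (\<lambda>y3. spray F x y3 l) k y2) j y1) i y
   = G3 l y (axis i 1) (axis j 1) (axis k 1)"
  by (rule pd_via[OF open_nz _ _ HG2]) (auto simp: spray2)

lemma Fy: "y \<noteq> 0 \<Longrightarrow> pd (\<lambda>y'. F x y') l y = Fd y (axis l 1)"
  by (rule pd_via[OF open_nz _ _ HF]) (auto simp: F_eq sv_def)

lemma F2_1: "y \<noteq> 0 \<Longrightarrow> pd (\<lambda>y''. (F x y'')^2) j y = K1 y (axis j 1)"
  by (rule pd_via[OF open_nz _ _ HK0]) (auto simp: F_eq sv_def)

lemma fund: "y \<noteq> 0 \<Longrightarrow> fund_tensor F x y i j = 1/2 * K2 y (axis i 1) (axis j 1)"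
  unfolding fund_tensor_def
  by (subst pd_via[OF open_nz _ _ HK1]) (auto simp: F2_1)

lemma lands: "y \<noteq> 0 \<Longrightarrow> landsberg F x y i j k
   = - 1/2 * F x y * (\<Sum>l\<in>UNIV. Fd y (axis l 1) * G3 l y (axis i 1) (axis j 1) (axis k 1))"
  unfolding landsberg_def by (simp add: Fy spray3)

lemma ay_axis: "ay y (axis l 1) = al y $ l"
  by (simp add: ay_def al_nth inner_axis)

lemma inner_al1: "inner (al y) d = ay y d" by (simp add: al_def ay_def divide_inverse mult.commute)
lemma inner_al2: "inner d (al y) = ay y d" by (subst inner_commute) (rule inner_al1)
lemma ay_al: "y \<noteq> 0 \<Longrightarrow> ay y (al y) = 1"
proof -
  assume y: "y \<noteq> 0"
  have "ay y (al y) = inverse (norm y) * (inner y y / norm y)"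
    by (simp add: ay_def al_def)
  also have "inner y y = norm y * norm y" by (simp add: dot_square_norm power2_eq_square)
  finally show ?thesis using y by simp
qed
lemma inner_alal: "y \<noteq> 0 \<Longrightarrow> inner (al y) (al y) = 1"
  by (simp add: inner_al1 ay_al)
lemma ay_x: "ay y x = sv y" by (simp add: ay_def sv_def inner_commute)

lemma Fd_axis: "Fd y (axis l 1) = (f0 (sv y) - f1 (sv y) * sv y) * al y $ l + f1 (sv y) * x $ l"
  by (simp add: Fd_def ay_axis inner_axis algebra_simps)

lemma Tn_eq: "y \<noteq> 0 \<Longrightarrow> (\<Sum>l\<in>UNIV. Fd y (axis l 1) * G3 l y t v w)
  = bil9 (CD y t) (Cxx y t) (Cxb y t) (Cxt y t) (Cbx y t) (Cbb y t) (Cbt y t) (Ctx y t) (Ctb y t) (Ctt y t) x (al y) t v w"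
proof -
  assume y: "y \<noteq> 0"
  then have n: "norm y \<noteq> 0" by simp
  show ?thesis
    apply (simp only: Fd_axis G3_def contr5)
    using n y apply (simp add: inner_alal inner_al1 inner_al2 ay_al ay_x bil9_def g3a_def g3x_def g3t_def g3v_def g3w_def
      CD_def Cxx_def Cxb_def Cxt_def Cbx_def Cbb_def Cbt_def Ctx_def Ctb_def Ctt_def divide_simps)
    apply (simp add: algebra_simps power_numeral_reduce)
    done
qed

end

lemma Mf_eqI: "c = c' \<Longrightarrow> k1 = k1' \<Longrightarrow> k2 = k2' \<Longrightarrow> k3 = k3' \<Longrightarrow> k4 = k4'
  \<Longrightarrow> Mf a b c k1 k2 k3 k4 = Mf a b c' k1' k2' k3' k4'"
  by simp

lemma axis_ne: "j \<noteq> i \<Longrightarrow> axis i (x::real) $ j = 0"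
  by (simp add: axis_def)

context sph begin

definition "rho y = (- f0 (sv y) * f1 (sv y) * sv y + f0 (sv y) ^ 2)"
definition "rho0 y = (f0 (sv y) * f2 (sv y) + f1 (sv y) ^ 2)"
definition "rho1 y = (f0 (sv y) * f1 (sv y) - f0 (sv y) * f2 (sv y) * sv y - f1 (sv y) ^ 2 * sv y)"
definition "rho2 y = (- f0 (sv y) * f1 (sv y) * sv y + f0 (sv y) * f2 (sv y) * sv y ^ 2 + f1 (sv y) ^ 2 * sv y ^ 2)"
definition "Aa y = f0 (sv y) - sv y * f1 (sv y)"
definition "Bb y = inner x x - sv y ^ 2"
definition "Dn y = Aa y + Bb y * f2 (sv y)"
definition "ic y = 1 / rho y"
definition "ia y = - f2 (sv y) / (f0 (sv y) * Aa y * Dn y)"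
definition "ib y = - rho1 y / (f0 (sv y) * rho y * Dn y)"
definition "ie y = - (f0 (sv y) ^ 2 * rho2 y + Bb y * (rho0 y * rho2 y - rho1 y ^ 2)) / (rho y * f0 (sv y) ^ 3 * Dn y)"

lemma rho_alt: "rho y = f0 (sv y) * Aa y"
  by (simp add: rho_def Aa_def power2_eq_square algebra_simps)

lemma gmat_eq: "y \<noteq> 0 \<Longrightarrow> gmat F x y = Mf x (al y) (rho y) (rho0 y) (rho1 y) (rho1 y) (rho2 y)"
proof -
  assume y: "y \<noteq> 0"
  show ?thesis
  unfolding gmat_def Mf_def vec_eq_iff
  by (simp add: fund[OF y] K2_def ay_axis inner_axis inner_axis_axis axis_ne rho_def rho0_def rho1_def rho2_def algebra_simps)
qed

lemma ginv_eq:
  assumes y: "y \<noteq> 0" and nz: "f0 (sv y) \<noteq> 0" "Aa y \<noteq> 0" "Dn y \<noteq> 0"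
  shows "matrix_inv (gmat F x y) = Mf x (al y) (ic y) (ia y) (ib y) (ib y) (ie y)"
proof -
  have r: "rho y \<noteq> 0" using nz by (simp add: rho_alt)
  have e: "inner x (al y) = sv y" "inner (al y) (al y) = 1" "inner (al y) x = sv y"
    using y by (simp_all add: inner_al2 inner_al1 ay_x inner_alal ay_al)
  note defs = ic_def ia_def ib_def ie_def rho_def rho0_def rho1_def rho2_def Aa_def Bb_def Dn_def
  have 1: "Mf x (al y) (rho y) (rho0 y) (rho1 y) (rho1 y) (rho2 y) ** Mf x (al y) (ic y) (ia y) (ib y) (ib y) (ie y) = mat 1"
    unfolding Mf_mult mat1_Mf[of x "al y"] e
    apply (rule Mf_eqI)
    using nz r by (simp_all add: defs divide_simps, (simp_all add: algebra_simps power_numeral_reduce)?)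
  have 2: "Mf x (al y) (ic y) (ia y) (ib y) (ib y) (ie y) ** Mf x (al y) (rho y) (rho0 y) (rho1 y) (rho1 y) (rho2 y) = mat 1"
    unfolding Mf_mult mat1_Mf[of x "al y"] e
    apply (rule Mf_eqI)
    using nz r by (simp_all add: defs divide_simps, (simp_all add: algebra_simps power_numeral_reduce)?)
  show ?thesis unfolding gmat_eq[OF y] by (rule matrix_inv_eq[OF 1 2])
qed

end

context sph begin

abbreviation "Bt y t \<equiv> bil9 (CD y t) (Cxx y t) (Cxb y t) (Cxt y t) (Cbx y t) (Cbb y t) (Cbt y t) (Ctx y t) (Ctb y t) (Ctt y t) x (al y) t"

lemma van1: "y \<noteq> 0 \<Longrightarrow> Bt y t x (al y) = 0"
  apply (simp add: bil9_def inner_alal inner_al1 inner_al2 ay_al ay_x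
      CD_def Cxx_def Cxb_def Cxt_def Cbx_def Cbb_def Cbt_def Ctx_def Ctb_def Ctt_def divide_simps)
  apply (simp add: algebra_simps power_numeral_reduce)
  done

lemma van2: "y \<noteq> 0 \<Longrightarrow> Bt y t (al y) x = 0"
  apply (simp add: bil9_def inner_alal inner_al1 inner_al2 ay_al ay_x
      CD_def Cxx_def Cxb_def Cxt_def Cbx_def Cbb_def Cbt_def Ctx_def Ctb_def Ctt_def divide_simps)
  apply (simp add: algebra_simps power_numeral_reduce)
  done

lemma van3: "y \<noteq> 0 \<Longrightarrow> Bt y t (al y) (al y) = 0"
  apply (simp add: bil9_def inner_alal inner_al1 inner_al2 ay_al ay_x
      CD_def Cxx_def Cxb_def Cxt_def Cbx_def Cbb_def Cbt_def Ctx_def Ctb_def Ctt_def divide_simps)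
  apply (simp add: algebra_simps power_numeral_reduce)
  done

definition "L1s y = 3 * f1 (sv y) * p2 (sv y) + f0 (sv y) * p3 (sv y) + (sv y * f0 (sv y) + Bb y * f1 (sv y)) * q3 (sv y)"
definition "L2s y = - sv y * f0 (sv y) * p2 (sv y) + f1 (sv y) * (p0 (sv y) - sv y * p1 (sv y))
   + (sv y * f0 (sv y) + Bb y * f1 (sv y)) * (q1 (sv y) - sv y * q2 (sv y))"
definition "NN y = Bb y * Aa y * L1s y + ((real CARD('n) + 1) * Aa y + (real CARD('n) - 2) * Bb y * f2 (sv y)) * L2s y"

lemma key: "y \<noteq> 0 \<Longrightarrow> norm y * (Dn y * (CD y t * real CARD('n) + Cxx y t * (x \<bullet> x) + Cxb y t * (x \<bullet> al y)
   + Cxt y t * (x \<bullet> t) + Cbx y t * (al y \<bullet> x) + Cbb y t * (al y \<bullet> al y) + Cbt y t * (al y \<bullet> t)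
   + Ctx y t * (t \<bullet> x) + Ctb y t * (t \<bullet> al y) + Ctt y t * (t \<bullet> t)) - f2 (sv y) * Bt y t x x)
   = NN y * (inner x t - sv y * ay y t)"
  apply (simp add: bil9_def inner_alal inner_al1 inner_al2 ay_al ay_x NN_def L1s_def L2s_def Aa_def Bb_def Dn_def
      CD_def Cxx_def Cxb_def Cxt_def Cbx_def Cbb_def Cbt_def Ctx_def Ctb_def Ctt_def divide_simps inner_commute[of t x])
  apply (simp add: algebra_simps power_numeral_reduce)
  done

end

lemma aux_alg: "(f::real) \<noteq> 0 \<Longrightarrow> A \<noteq> 0 \<Longrightarrow> D \<noteq> 0 \<Longrightarrow>
  (- 1/2 * (u * f)) * ((1 / (f * A)) * T + (- g / (f * A * D)) * X) = - (u * (D * T - g * X)) / (2 * A * D)"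
  by (simp add: field_simps)

context sph begin

lemma J_formula:
  assumes y: "y \<noteq> 0" and nz: "f0 (sv y) \<noteq> 0" "Aa y \<noteq> 0" "Dn y \<noteq> 0"
  shows "mean_landsberg F x y i = - NN y / (2 * Aa y * Dn y) * (x $ i - sv y * y $ i / norm y)"
proof -
  let ?t = "axis i (1::real) :: real^'n"
  let ?M = "Mf x (al y) (ic y) (ia y) (ib y) (ib y) (ie y)"
  let ?TR = "CD y ?t * real CARD('n) + Cxx y ?t * (x \<bullet> x) + Cxb y ?t * (x \<bullet> al y)
   + Cxt y ?t * (x \<bullet> ?t) + Cbx y ?t * (al y \<bullet> x) + Cbb y ?t * (al y \<bullet> al y) + Cbt y ?t * (al y \<bullet> ?t)
   + Ctx y ?t * (?t \<bullet> x) + Ctb y ?t * (?t \<bullet> al y) + Ctt y ?t * (?t \<bullet> ?t)"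
  have "mean_landsberg F x y i = (\<Sum>j\<in>UNIV. \<Sum>k\<in>UNIV. ?M $ j $ k * ((- 1/2 * F x y) * Bt y ?t (axis j 1) (axis k 1)))"
    unfolding mean_landsberg_def ginv_def ginv_eq[OF y nz] lands[OF y] Tn_eq[OF y] by simp
  also have "\<dots> = (- 1/2 * F x y) * (\<Sum>j\<in>UNIV. \<Sum>k\<in>UNIV. ?M $ j $ k * Bt y ?t (axis j 1) (axis k 1))"
    by (simp add: sum_distrib_left algebra_simps)
  also have "\<dots> = (- 1/2 * F x y) * (ic y * (\<Sum>j\<in>UNIV. Bt y ?t (axis j 1) (axis j 1)) + ia y * Bt y ?t x x
      + ib y * Bt y ?t x (al y) + ib y * Bt y ?t (al y) x + ie y * Bt y ?t (al y) (al y))"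
    by (simp only: Mf_contract[OF bil9_bilinear])
  also have "\<dots> = (- 1/2 * (norm y * f0 (sv y))) * ((1 / (f0 (sv y) * Aa y)) * ?TR + (- f2 (sv y) / (f0 (sv y) * Aa y * Dn y)) * Bt y ?t x x)"
    by (simp only: van1[OF y] van2[OF y] van3[OF y] bil9_trace F_eq sv_def[symmetric] ic_def ia_def rho_alt)
      simp
  also have "\<dots> = - (norm y * (Dn y * ?TR - f2 (sv y) * Bt y ?t x x)) / (2 * Aa y * Dn y)"
    by (rule aux_alg[OF nz])
  also have "\<dots> = - (NN y * (inner x ?t - sv y * ay y ?t)) / (2 * Aa y * Dn y)"
    by (simp only: key[OF y])
  also have "\<dots> = - NN y / (2 * Aa y * Dn y) * (x $ i - sv y * y $ i / norm y)"
    by (simp add: inner_axis ay_axis al_nth)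
  finally show ?thesis .
qed

end

lemma DIM_cart: "DIM(real^'n) = CARD('n)" by simp

context sph begin

lemma qf: "y \<noteq> 0 \<Longrightarrow> (\<Sum>i\<in>UNIV. \<Sum>j\<in>UNIV. fund_tensor F x y i j * v$i * v$j)
   = rho y * (v \<bullet> v) + rho0 y * (x \<bullet> v)^2 + (rho1 y + rho1 y) * ((x \<bullet> v) * (al y \<bullet> v)) + rho2 y * (al y \<bullet> v)^2"
proof -
  assume y: "y \<noteq> 0"
  have "fund_tensor F x y i j = gmat F x y $ i $ j" for i j by (simp add: gmat_def)
  then show ?thesis by (simp add: gmat_eq[OF y] Mf_qf)
qed

lemma f0pos: "(\<And>y. y \<noteq> 0 \<Longrightarrow> F x y > 0) \<Longrightarrow> y \<noteq> 0 \<Longrightarrow> f0 (sv y) > 0"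
proof -
  assume Fp: "\<And>y. y \<noteq> 0 \<Longrightarrow> F x y > 0" and y: "y \<noteq> 0"
  have "0 < norm y * f0 (sv y)" using Fp[OF y] by (simp add: F_eq sv_def)
  then show ?thesis using y by (simp add: zero_less_mult_iff)
qed

lemma P1:
  assumes gp: "\<And>y v. y \<noteq> 0 \<Longrightarrow> v \<noteq> 0 \<Longrightarrow> (\<Sum>i\<in>UNIV. \<Sum>j\<in>UNIV. fund_tensor F x y i j * v$i * v$j) > 0"
    and y: "y \<noteq> 0" and z: "z \<noteq> 0" "x \<bullet> z = 0" "y \<bullet> z = 0"
  shows "rho y > 0"
proof -
  have "al y \<bullet> z = 0" using z by (simp add: inner_al1 ay_def)
  then have "0 < rho y * (z \<bullet> z)" using gp[OF y z(1)] qf[OF y, of z] z by simp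
  moreover have "z \<bullet> z > 0" using z by simp
  ultimately show ?thesis by (simp add: zero_less_mult_iff)
qed

lemma P2:
  assumes Fp: "\<And>y. y \<noteq> 0 \<Longrightarrow> F x y > 0"
    and gp: "\<And>y v. y \<noteq> 0 \<Longrightarrow> v \<noteq> 0 \<Longrightarrow> (\<Sum>i\<in>UNIV. \<Sum>j\<in>UNIV. fund_tensor F x y i j * v$i * v$j) > 0"
    and y: "y \<noteq> 0" and B: "Bb y > 0"
  shows "Dn y > 0"
proof -
  have f: "f0 (sv y) > 0" by (rule f0pos[OF Fp y])
  define c where "c = - (Bb y * f1 (sv y) / f0 (sv y)) - sv y"
  define w where "w = x + c *\<^sub>R al y"
  have e: "inner x (al y) = sv y" "inner (al y) (al y) = 1" "inner (al y) x = sv y"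
    using y by (simp_all add: inner_al2 inner_al1 ay_x inner_alal ay_al)
  have xw: "x \<bullet> w = x \<bullet> x + c * sv y" and aw: "al y \<bullet> w = sv y + c"
    and ww: "w \<bullet> w = x \<bullet> x + 2 * c * sv y + c^2"
    unfolding w_def using e by (simp_all add: inner_add_left inner_add_right power2_eq_square algebra_simps)
  have w0: "w \<noteq> 0"
  proof
    assume "w = 0"
    then have xe: "x = - c *\<^sub>R al y" unfolding w_def by (simp add: add_eq_0_iff)
    have "x \<bullet> x = c^2" using arg_cong[OF xe, of "\<lambda>v. v \<bullet> v"] e by (simp add: power2_eq_square)
    moreover have "sv y = - c" using arg_cong[OF xe, of "\<lambda>v. v \<bullet> al y"] e by simp
    ultimately have "Bb y = 0" by (simp add: Bb_def)
    then show False using B by simp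
  qed
  have Q: "rho y * (w \<bullet> w) + rho0 y * (x \<bullet> w)^2 + (rho1 y + rho1 y) * ((x \<bullet> w) * (al y \<bullet> w)) + rho2 y * (al y \<bullet> w)^2
      = Bb y * f0 (sv y) * Dn y"
    unfolding xw aw ww c_def using f
    by (simp add: rho_def rho0_def rho1_def rho2_def Bb_def Dn_def Aa_def divide_simps)
       (simp add: algebra_simps power_numeral_reduce)
  have h: "0 < Bb y * f0 (sv y) * Dn y" using gp[OF y w0] qf[OF y, of w] Q by simp
  have bf: "Bb y * f0 (sv y) > 0" using B f by simp
  show ?thesis using h bf by (simp add: zero_less_mult_iff)
qed

end

lemma sq_lt: "\<bar>z\<bar> < (r::real) \<Longrightarrow> z^2 < r^2"
proof -
  assume a: "\<bar>z\<bar> < r"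
  then have "\<bar>z\<bar> < \<bar>r\<bar>" by auto
  then show ?thesis using abs_le_square_iff[of r z] by linarith
qed

context sph begin

lemma exists_yv:
  assumes n2: "CARD('n) \<ge> 2" and x0: "x \<noteq> 0" and tau: "\<bar>\<tau>\<bar> \<le> norm x"
  shows "\<exists>y'. y' \<noteq> 0 \<and> sv y' = \<tau>"
proof -
  have "2 \<le> DIM(real^'n)" using n2 by simp
  from orthogonal_to_vector_exists[OF this, of x] obtain z where z: "z \<noteq> 0" "orthogonal x z" by blast
  define r where "r = norm x"
  have r0: "r > 0" using x0 by (simp add: r_def)
  define zz where "zz = (r / norm z) *\<^sub>R z"
  have xz: "x \<bullet> zz = 0" using z by (simp add: zz_def orthogonal_def)
  have zz: "zz \<bullet> zz = r^2" using z by (simp add: zz_def dot_square_norm power2_eq_square)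
  have t2: "\<tau>^2 \<le> r^2" using tau abs_le_square_iff[of \<tau> "norm x"] by (simp add: r_def)
  define y' where "y' = \<tau> *\<^sub>R x + sqrt (r^2 - \<tau>^2) *\<^sub>R zz"
  have sq: "sqrt (r^2 - \<tau>^2) * sqrt (r^2 - \<tau>^2) = r^2 - \<tau>^2" using t2 by simp
  have yy: "y' \<bullet> y' = (r^2)^2"
  proof -
    have "y' \<bullet> y' = \<tau>^2 * (x \<bullet> x) + (sqrt (r^2 - \<tau>^2) * sqrt (r^2 - \<tau>^2)) * (zz \<bullet> zz)"
      unfolding y'_def using xz
      by (simp add: inner_add_left inner_add_right inner_commute power2_eq_square algebra_simps)
    also have "\<dots> = (r^2)^2" unfolding sq zz by (simp add: r_def dot_square_norm power2_eq_square algebra_simps)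
    finally show ?thesis .
  qed
  have ny: "norm y' = r^2"
  proof -
    have "norm y' ^ 2 = (r^2)^2" using yy by (simp add: dot_square_norm)
    then show ?thesis by (metis norm_ge_zero power2_eq_iff_nonneg zero_le_power2)
  qed
  have xy: "x \<bullet> y' = \<tau> * r^2"
    unfolding y'_def using xz by (simp add: inner_add_right r_def dot_square_norm)
  have "y' \<noteq> 0" using ny r0 by auto
  moreover have "sv y' = \<tau>" using r0 by (simp add: sv_def ny xy)
  ultimately show ?thesis by blast
qed

lemma A_pos:
  assumes hD: "\<And>z. \<bar>z\<bar> < norm x \<Longrightarrow> f0 z - z * f1 z + (norm x^2 - z^2) * f2 z > 0"
    and f00: "f0 0 > 0" and tau: "\<bar>\<tau>\<bar> < norm x"
  shows "f0 \<tau> - \<tau> * f1 \<tau> > 0"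
proof -
  define r where "r = norm x"
  define h where "h z = (f0 z - z * f1 z) * sqrt (r^2 - z^2)" for z
  have der: "(h has_real_derivative (- z * (f0 z - z * f1 z + (r^2 - z^2) * f2 z) / sqrt (r^2 - z^2))) (at z)"
    if z: "\<bar>z\<bar> < r" for z
  proof -
    have zl: "\<bar>z\<bar> \<le> norm x" using z by (simp add: r_def)
    have B: "r^2 - z^2 > 0" using sq_lt[OF z] by simp
    have sq: "sqrt (r^2 - z^2) > 0" using B by simp
    have dA: "((\<lambda>z. f0 z - z * f1 z) has_real_derivative f1 z - (f1 z + z * f2 z)) (at z)"
      by (auto intro!: derivative_eq_intros df0[OF zl] df1[OF zl])
    have dS: "((\<lambda>z. sqrt (r^2 - z^2)) has_real_derivative inverse (sqrt (r^2 - z^2)) / 2 * (- 2 * z)) (at z)"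
      by (rule DERIV_chain2[where g="\<lambda>z. r^2 - z^2" and x=z, OF DERIV_real_sqrt[OF B]]) (auto intro!: derivative_eq_intros)
    have "(h has_real_derivative (f1 z - (f1 z + z * f2 z)) * sqrt (r^2 - z^2)
        + inverse (sqrt (r^2 - z^2)) / 2 * (- 2 * z) * (f0 z - z * f1 z)) (at z)"
      unfolding h_def[abs_def] using DERIV_mult[OF dA dS] by simp
    moreover have "(f1 z - (f1 z + z * f2 z)) * sqrt (r^2 - z^2)
        + inverse (sqrt (r^2 - z^2)) / 2 * (- 2 * z) * (f0 z - z * f1 z)
        = - z * (f0 z - z * f1 z + (r^2 - z^2) * f2 z) / sqrt (r^2 - z^2)"
    proof -
      have "sqrt (r^2 - z^2) * sqrt (r^2 - z^2) = r^2 - z^2" using B by simp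
      then show ?thesis using sq by (simp add: field_simps)
    qed
    ultimately show ?thesis by simp
  qed
  have cont: "continuous_on {a..b} h" if "-r \<le> a" "b \<le> r" for a b
  proof (rule continuous_at_imp_continuous_on, rule ballI)
    fix z assume "z \<in> {a..b}"
    then have zl: "\<bar>z\<bar> \<le> norm x" using that by (auto simp: r_def)
    show "isCont h z" unfolding h_def[abs_def]
      by (intro continuous_intros DERIV_isCont[OF df0[OF zl]] DERIV_isCont[OF df1[OF zl]])
  qed
  have hr: "h r = 0" "h (-r) = 0" by (simp_all add: h_def)
  have sqt: "sqrt (r^2 - \<tau>^2) > 0"
    using sq_lt[of \<tau> r] tau by (simp add: r_def)
  consider "\<tau> = 0" | "\<tau> > 0" | "\<tau> < 0" by linarith
  then show ?thesis
  proof cases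
    case 1 then show ?thesis using f00 by simp
  next
    case 2
    have lt: "\<tau> < r" using tau by (simp add: r_def)
    have "- r \<le> \<tau>" using 2 norm_ge_zero[of x] unfolding r_def by linarith
    then have c1: "continuous_on {\<tau>..r} h" by (intro cont) auto
    have d1: "h differentiable (at z)" if "\<tau> < z" "z < r" for z
      using der[of z] that 2 real_differentiable_def by force
    obtain l z where lz: "\<tau> < z" "z < r" "DERIV h z :> l" "h r - h \<tau> = (r - \<tau>) * l"
      using MVT[OF lt c1 d1] by blast
    have zr: "\<bar>z\<bar> < r" using lz 2 by auto
    have "l = - z * (f0 z - z * f1 z + (r^2 - z^2) * f2 z) / sqrt (r^2 - z^2)"
      using DERIV_unique[OF lz(3) der[OF zr]] .
    moreover have "f0 z - z * f1 z + (r^2 - z^2) * f2 z > 0" using hD zr by (simp add: r_def)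
    moreover have "sqrt (r^2 - z^2) > 0" using sq_lt[OF zr] by simp
    ultimately have "l < 0" using lz 2 by (simp add: divide_neg_pos mult_pos_pos)
    then have "(r - \<tau>) * l < 0" using lt by (simp add: mult_pos_neg)
    then have "h \<tau> > 0" using lz(4) hr by linarith
    then show ?thesis using sqt by (simp add: h_def zero_less_mult_iff)
  next
    case 3
    have lt: "-r < \<tau>" using tau by (simp add: r_def)
    have "\<tau> \<le> r" using 3 norm_ge_zero[of x] unfolding r_def by linarith
    then have c1: "continuous_on {-r..\<tau>} h" by (intro cont) auto
    have d1: "h differentiable (at z)" if "-r < z" "z < \<tau>" for z
      using der[of z] that 3 real_differentiable_def by force
    obtain l z where lz: "-r < z" "z < \<tau>" "DERIV h z :> l" "h \<tau> - h (-r) = (\<tau> - -r) * l"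
      using MVT[OF lt c1 d1] by blast
    have zr: "\<bar>z\<bar> < r" using lz 3 by auto
    have le: "l = - z * (f0 z - z * f1 z + (r^2 - z^2) * f2 z) / sqrt (r^2 - z^2)"
      using DERIV_unique[OF lz(3) der[OF zr]] .
    have dp: "f0 z - z * f1 z + (r^2 - z^2) * f2 z > 0" using hD zr by (simp add: r_def)
    have sp: "sqrt (r^2 - z^2) > 0" using sq_lt[OF zr] by simp
    have "z < 0" using lz 3 by simp
    then have "z * (f0 z - z * f1 z + (r^2 - z^2) * f2 z) < 0" using dp by (rule mult_neg_pos)
    then have "z * (f0 z - z * f1 z + (r^2 - z^2) * f2 z) / sqrt (r^2 - z^2) < 0" using sp by (rule divide_neg_pos)
    then have "l > 0" unfolding le by simp
    then have "(\<tau> - -r) * l > 0" using lt by simp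
    then have "h \<tau> > 0" using lz(4) hr by linarith
    then show ?thesis using sqt by (simp add: h_def zero_less_mult_iff)
  qed
qed

end

context sph begin

lemma pos_all:
  assumes n2: "CARD('n) \<ge> 2"
    and Fp: "\<And>y. y \<noteq> 0 \<Longrightarrow> F x y > 0"
    and gp: "\<And>y v. y \<noteq> 0 \<Longrightarrow> v \<noteq> 0 \<Longrightarrow> (\<Sum>i\<in>UNIV. \<Sum>j\<in>UNIV. fund_tensor F x y i j * v$i * v$j) > 0"
    and tau: "\<bar>\<tau>\<bar> \<le> norm x"
  shows "f0 \<tau> > 0 \<and> f0 \<tau> - \<tau> * f1 \<tau> > 0 \<and> f0 \<tau> - \<tau> * f1 \<tau> + (norm x^2 - \<tau>^2) * f2 \<tau> > 0"
proof (cases "x = 0")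
  case True
  then have t0: "\<tau> = 0" using tau by simp
  define y0 where "y0 = axis (undefined::'n) (1::real)"
  have y0: "y0 \<noteq> 0" by (simp add: y0_def)
  have "sv y0 = 0" unfolding sv_def using True by simp
  then have "f0 0 > 0" using f0pos[OF Fp y0] by simp
  then show ?thesis using t0 True by simp
next
  case False
  have f0p: "f0 t > 0" if tt: "\<bar>t\<bar> \<le> norm x" for t
  proof -
    obtain y' where "y' \<noteq> 0" "sv y' = t" using exists_yv[OF n2 False tt] by blast
    then show ?thesis using f0pos[OF Fp, of y'] by simp
  qed
  have hD: "f0 z - z * f1 z + (norm x^2 - z^2) * f2 z > 0" if z: "\<bar>z\<bar> < norm x" for z
  proof -
    obtain y' where y': "y' \<noteq> 0" "sv y' = z" using exists_yv[OF n2 False] z by force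
    have Bp: "Bb y' > 0" using sq_lt[OF z] y' by (simp add: Bb_def dot_square_norm)
    have "Dn y' > 0" using P2[OF Fp gp y'(1) Bp] by blast
    then show ?thesis using y' by (simp add: Dn_def Aa_def Bb_def dot_square_norm)
  qed
  have Ap: "f0 \<tau> - \<tau> * f1 \<tau> > 0"
  proof (cases "\<bar>\<tau>\<bar> < norm x")
    case True
    show ?thesis by (rule A_pos[OF hD f0p True]) simp_all
  next
    case eq: False
    then have te: "\<bar>\<tau>\<bar> = norm x" using tau by simp
    then have t0: "\<tau> \<noteq> 0" using False by auto
    have "2 \<le> DIM(real^'n)" using n2 by simp
    from orthogonal_to_vector_exists[OF this, of x] obtain z where z: "z \<noteq> 0" "orthogonal x z" by blast
    define y' where "y' = \<tau> *\<^sub>R x"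
    have y': "y' \<noteq> 0" using t0 False by (simp add: y'_def)
    have xz: "x \<bullet> z = 0" "y' \<bullet> z = 0" using z by (simp_all add: y'_def orthogonal_def)
    have svy: "sv y' = \<tau>"
    proof -
      have "sv y' = \<tau> * (x \<bullet> x) / (\<bar>\<tau>\<bar> * norm x)" by (simp add: sv_def y'_def)
      also have "\<dots> = \<tau>" using te False by (simp add: dot_square_norm power2_eq_square)
      finally show ?thesis .
    qed
    have "rho y' > 0" by (rule P1[OF gp y' z(1) xz])
    then have "f0 \<tau> * (f0 \<tau> - \<tau> * f1 \<tau>) > 0" by (simp add: rho_alt Aa_def svy)
    moreover have "f0 \<tau> > 0" using f0p tau by simp
    ultimately show ?thesis by (simp add: zero_less_mult_iff)
  qed
  have Dp: "f0 \<tau> - \<tau> * f1 \<tau> + (norm x^2 - \<tau>^2) * f2 \<tau> > 0"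
  proof (cases "\<bar>\<tau>\<bar> < norm x")
    case True then show ?thesis by (rule hD)
  next
    case False
    then have "\<bar>\<tau>\<bar> = norm x" using tau by simp
    then have "norm x^2 - \<tau>^2 = 0" by (metis power2_abs diff_self)
    then show ?thesis using Ap by simp
  qed
  show ?thesis using f0p[OF tau] Ap Dp by simp
qed

lemma one_dim:
  assumes n1: "CARD('n) = 1" and y: "y \<noteq> 0"
  shows "mean_landsberg F x y i = 0" "x $ i - sv y * y $ i / norm y = 0"
proof -
  obtain a :: 'n where "UNIV = {a}" using n1 card_1_singletonE by blast
  then have all: "j = i" for j :: 'n by (metis UNIV_I singletonD)
  have yi: "y $ i \<noteq> 0"
  proof
    assume "y $ i = 0"
    then have "\<forall>j. y $ j = 0 $ j" using all by (metis zero_index)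
    then have "y = 0" by (simp add: vec_eq_iff)
    then show False using y by simp
  qed
  have ny: "norm y \<noteq> 0" using y by simp
  have ali: "al y $ i \<noteq> 0" using yi ny by (simp add: al_nth)
  define c where "c = 1 / al y $ i"
  have "axis i (1::real) $ j = (c *\<^sub>R al y) $ j" for j
    using ali by (simp add: all[of j] c_def)
  then have e: "axis i (1::real) = c *\<^sub>R al y" by (simp add: vec_eq_iff)
  have "landsberg F x y i j k = 0" for j k
  proof -
    have jk: "j = i" "k = i" using all by auto
    have "landsberg F x y i j k = - 1/2 * F x y * Bt y (axis i 1) (c *\<^sub>R al y) (c *\<^sub>R al y)"
      by (simp add: lands[OF y] Tn_eq[OF y] jk e[symmetric])
    also have "\<dots> = 0"
      by (simp add: bilinear_lmul[OF bil9_bilinear] bilinear_rmul[OF bil9_bilinear] van3[OF y])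
    finally show ?thesis .
  qed
  then show "mean_landsberg F x y i = 0" by (simp add: mean_landsberg_def)
  have ua: "(UNIV::'n set) = {i}" using \<open>UNIV = {a}\<close> by (metis UNIV_I singletonD)
  have xy: "x \<bullet> y = x $ i * y $ i" by (simp add: inner_vec_def ua)
  have yy: "norm y ^ 2 = y $ i * y $ i" by (simp add: power2_norm_eq_inner inner_vec_def ua)
  show "x $ i - sv y * y $ i / norm y = 0"
    using ny yy yi by (simp add: sv_def xy field_simps power2_eq_square)
qed

end

theorem corollary3:
  fixes U :: "(real^'n) set" and D :: "(real \<times> real) set"
    and \<phi> P Q :: "real \<Rightarrow> real \<Rightarrow> real"
  assumes U_domain: "open U" "connected U" "U \<noteq> {}"
    and D_open: "open D"
    and D_contains: "\<forall>x\<in>U. \<forall>s. \<bar>s\<bar> \<le> norm x \<longrightarrow> (norm x, s) \<in> D"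
    and phi_smooth: "smooth_on D (\<lambda>(r, s). \<phi> r s)"
    and P_smooth: "smooth_on D (\<lambda>(r, s). P r s)"
    and Q_smooth: "smooth_on D (\<lambda>(r, s). Q r s)"
    and finsler: "finsler_metric U (sph_metric \<phi>)"
    and spray_PQ: "\<forall>x\<in>U. \<forall>y. y \<noteq> 0 \<longrightarrow> (\<forall>i.
        spray (sph_metric \<phi>) x y i
          = norm y * P (norm x) ((x \<bullet> y) / norm y) * y$i
            + (norm y)^2 * Q (norm x) ((x \<bullet> y) / norm y) * x$i)"
  shows "\<forall>x\<in>U. \<forall>y. y \<noteq> 0 \<longrightarrow> (\<forall>i.
        mean_landsberg (sph_metric \<phi>) x y i
          = Hcoef CARD('n) \<phi> P Q (norm x) ((x \<bullet> y) / norm y)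
            * (x$i - ((x \<bullet> y) / norm y) * y$i / norm y))"
proof (intro ballI allI impI)
  fix x :: "real^'n" and y :: "real^'n" and i :: 'n
  assume x: "x \<in> U" and y: "y \<noteq> 0"
  have inD: "(norm x, t) \<in> D" if "\<bar>t\<bar> \<le> norm x" for t using D_contains x that by blast
  have dd: "\<And>g k t. smooth_on D (\<lambda>(r, s). g r s) \<Longrightarrow> \<bar>t\<bar> \<le> norm x \<Longrightarrow>
      ((\<lambda>t. (ds ^^ k) g (norm x) t) has_real_derivative (ds ^^ Suc k) g (norm x) t) (at t)"
    using smooth_deriv inD by blast
  have d0: "\<And>g t. smooth_on D (\<lambda>(r, s). g r s) \<Longrightarrow> \<bar>t\<bar> \<le> norm x \<Longrightarrow>
      (g (norm x) has_real_derivative ds g (norm x) t) (at t)"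
    using dd[where k=0] by simp
  have d1: "\<And>g t. smooth_on D (\<lambda>(r, s). g r s) \<Longrightarrow> \<bar>t\<bar> \<le> norm x \<Longrightarrow>
      (ds g (norm x) has_real_derivative ds (ds g) (norm x) t) (at t)"
    using dd[where k="Suc 0"] by simp
  have d2: "\<And>g t. smooth_on D (\<lambda>(r, s). g r s) \<Longrightarrow> \<bar>t\<bar> \<le> norm x \<Longrightarrow>
      (ds (ds g) (norm x) has_real_derivative ds (ds (ds g)) (norm x) t) (at t)"
    using dd[where k="Suc (Suc 0)"] by simp
  interpret S: sph x "sph_metric \<phi>" "\<phi> (norm x)" "ds \<phi> (norm x)" "ds (ds \<phi>) (norm x)" "ds (ds (ds \<phi>)) (norm x)"
    "P (norm x)" "ds P (norm x)" "ds (ds P) (norm x)" "ds (ds (ds P)) (norm x)"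
    "Q (norm x)" "ds Q (norm x)" "ds (ds Q) (norm x)" "ds (ds (ds Q)) (norm x)"
  proof
    show "\<And>y. sph_metric \<phi> x y = norm y * \<phi> (norm x) (inner x y / norm y)"
      by (simp add: sph_metric_def)
    show "\<And>y l. y \<noteq> 0 \<Longrightarrow> spray (sph_metric \<phi>) x y l
        = norm y * P (norm x) (inner x y / norm y) * y$l + (norm y)^2 * Q (norm x) (inner x y / norm y) * x$l"
      using spray_PQ x by blast
  qed (auto intro: d0 d1 d2 phi_smooth P_smooth Q_smooth)
  have s: "(x \<bullet> y) / norm y = S.sv y" by (simp add: S.sv_def)
  show "mean_landsberg (sph_metric \<phi>) x y i
          = Hcoef CARD('n) \<phi> P Q (norm x) ((x \<bullet> y) / norm y)
            * (x$i - ((x \<bullet> y) / norm y) * y$i / norm y)"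
  proof (cases "CARD('n) = 1")
    case True
    show ?thesis unfolding s using S.one_dim[OF True y] by simp
  next
    case False
    then have n2: "CARD('n) \<ge> 2" using Suc_leI[OF zero_less_card_finite] by (simp add: Suc_le_eq) (metis Suc_1 Suc_le_eq One_nat_def le_neq_implies_less zero_less_card_finite Suc_leI)
    have Fp: "\<And>y. y \<noteq> 0 \<Longrightarrow> sph_metric \<phi> x y > 0" using finsler x unfolding finsler_metric_def by blast
    have gp: "\<And>y v. y \<noteq> 0 \<Longrightarrow> v \<noteq> 0 \<Longrightarrow>
        (\<Sum>i\<in>UNIV. \<Sum>j\<in>UNIV. fund_tensor (sph_metric \<phi>) x y i j * v$i * v$j) > 0"
      using finsler x unfolding finsler_metric_def by blast
    have pos: "\<phi> (norm x) (S.sv y) > 0 \<and> \<phi> (norm x) (S.sv y) - S.sv y * ds \<phi> (norm x) (S.sv y) > 0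
       \<and> \<phi> (norm x) (S.sv y) - S.sv y * ds \<phi> (norm x) (S.sv y) + (norm x^2 - S.sv y^2) * ds (ds \<phi>) (norm x) (S.sv y) > 0"
      by (rule S.pos_all[OF n2 Fp gp S.sv_bound])
    have nz: "\<phi> (norm x) (S.sv y) \<noteq> 0" "S.Aa y \<noteq> 0" "S.Dn y \<noteq> 0"
      using pos by (auto simp: S.Aa_def S.Dn_def S.Bb_def dot_square_norm)
    have H: "Hcoef CARD('n) \<phi> P Q (norm x) (S.sv y) = - S.NN y / (2 * S.Aa y * S.Dn y)"
      by (simp add: Hcoef_def L1_def L2_def S.NN_def S.L1s_def S.L2s_def S.Aa_def S.Dn_def S.Bb_def dot_square_norm)
    show ?thesis unfolding s H by (rule S.J_formula[OF y nz])
  qed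
qed

end
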